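(* Let $R$ be a localizable archimedean partially ordered commutative ring and let $q\in\mathrm{Loc}(R)$. Then $\mathrm{O}_{q<\infty}$ is dense in $\mathcal{K}(R)$.
   Context: Rings are commutative with unit; ring morphisms are unital. A partially ordered commutative ring is a commutative ring $R$ with partial order $\le$, $r\le s\Rightarrow r+t\le s+t$, positive cone $R^+$ closed under multiplication and containing all squares. $\mathbb{N}=\{1,2,\dots\}$, $\mathbb{N}_0=\mathbb{N}\cup\{0\}$. Archimedean: $kg+h\in R^+$ for all $k\in\mathbb{N}$ implies $g\in R^+$. $\mathrm{Loc}(R)$ is the set of $s\in1+R^+$ such that $rs\in R^+$ implies $r\in R^+$ for all $r$; localizable: every $r$ satisfies $-s\le r\le s$ for some $s\in\mathrm{Loc}(R)$. $R_{\mathrm{loc}}$: fractions $r/s$ ($r\in R$, $s\in\mathrm{Loc}(R)$), $r/s=r'/s'$ iff $rs'=r's$, ordered by $p/q\le r/s$ iff $ps\le rq$. $R^{\mathrm{bd}}_{\mathrm{loc}}=\{a:\exists n\in\mathbb{N}_0,\ -n\le a\le n\}$. $\mathcal{K}(R)$: ring morphisms $\varphi\colon R^{\mathrm{bd}}_{\mathrm{loc}}\to\mathbb{R}$ with $\varphi(a)\ge0$ for $a\ge0$, with the topology generated by the sets $\{\varphi:\varphi(a)\in V\}$, $a\in R^{\mathrm{bd}}_{\mathrm{loc}}$, $V\subseteq\mathbb{R}$ open. $\mathrm{O}_{q<\infty}=\{\varphi\in\mathcal{K}(R):\varphi(1/q)>0\}$. *)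

theory Defs
  imports "HOL-Analysis.Analysis"
begin

text \<open>A partially ordered commutative ring is encoded by its positive cone P:
  x \<le> y iff y - x \<in> P.  The cone axioms below are exactly: the order is a
  partial order compatible with addition, the positive cone is closed under
  multiplication and contains all squares.\<close>

definition po_cring :: "('a::comm_ring_1) set \<Rightarrow> bool" where
  "po_cring P \<longleftrightarrow>
     (\<forall>x\<in>P. \<forall>y\<in>P. x + y \<in> P) \<and>
     (\<forall>x\<in>P. \<forall>y\<in>P. x * y \<in> P) \<and>
     (\<forall>x. x * x \<in> P) \<and>
     (\<forall>x. x \<in> P \<and> - x \<in> P \<longrightarrow> x = 0)"

definition pleq :: "('a::comm_ring_1) set \<Rightarrow> 'a \<Rightarrow> 'a \<Rightarrow> bool" where
  "pleq P x y \<longleftrightarrow> y - x \<in> P"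

definition archimedean_po :: "('a::comm_ring_1) set \<Rightarrow> bool" where
  "archimedean_po P \<longleftrightarrow>
     (\<forall>g h. (\<forall>k::nat. k \<ge> 1 \<longrightarrow> of_nat k * g + h \<in> P) \<longrightarrow> g \<in> P)"

definition Loc :: "('a::comm_ring_1) set \<Rightarrow> 'a set" where
  "Loc P = {s. s - 1 \<in> P \<and> (\<forall>r. r * s \<in> P \<longrightarrow> r \<in> P)}"

definition localizable :: "('a::comm_ring_1) set \<Rightarrow> bool" where
  "localizable P \<longleftrightarrow> (\<forall>r. \<exists>s\<in>Loc P. pleq P (- s) r \<and> pleq P r s)"

text \<open>Elements of R_loc are represented by pairs (r,s) standing for r/s with s \<in> Loc P.\<close>

definition frac_eq :: "('a::comm_ring_1) \<times> 'a \<Rightarrow> 'a \<times> 'a \<Rightarrow> bool" where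
  "frac_eq a b \<longleftrightarrow> fst a * snd b = fst b * snd a"

definition frac_le :: "('a::comm_ring_1) set \<Rightarrow> 'a \<times> 'a \<Rightarrow> 'a \<times> 'a \<Rightarrow> bool" where
  "frac_le P a b \<longleftrightarrow> pleq P (fst a * snd b) (fst b * snd a)"

definition frac_add :: "('a::comm_ring_1) \<times> 'a \<Rightarrow> 'a \<times> 'a \<Rightarrow> 'a \<times> 'a" where
  "frac_add a b = (fst a * snd b + fst b * snd a, snd a * snd b)"

definition frac_mult :: "('a::comm_ring_1) \<times> 'a \<Rightarrow> 'a \<times> 'a \<Rightarrow> 'a \<times> 'a" where
  "frac_mult a b = (fst a * fst b, snd a * snd b)"

definition Rloc :: "('a::comm_ring_1) set \<Rightarrow> ('a \<times> 'a) set" where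
  "Rloc P = {a. snd a \<in> Loc P}"

definition Rbd :: "('a::comm_ring_1) set \<Rightarrow> ('a \<times> 'a) set" where
  "Rbd P = {a \<in> Rloc P. \<exists>n::nat. frac_le P (- of_nat n, 1) a \<and> frac_le P a (of_nat n, 1)}"

text \<open>K(R): positive unital ring morphisms R^bd_loc \<rightarrow> \<real>, represented as functions on
  representing pairs that respect equality of fractions, and are 0 outside R^bd_loc.\<close>
definition Kspace :: "('a::comm_ring_1) set \<Rightarrow> ('a \<times> 'a \<Rightarrow> real) set" where
  "Kspace P = {\<phi>.
     (\<forall>a. a \<notin> Rbd P \<longrightarrow> \<phi> a = 0) \<and>
     (\<forall>a\<in>Rbd P. \<forall>b\<in>Rbd P. frac_eq a b \<longrightarrow> \<phi> a = \<phi> b) \<and>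
     \<phi> (1, 1) = 1 \<and>
     (\<forall>a\<in>Rbd P. \<forall>b\<in>Rbd P. \<phi> (frac_add a b) = \<phi> a + \<phi> b) \<and>
     (\<forall>a\<in>Rbd P. \<forall>b\<in>Rbd P. \<phi> (frac_mult a b) = \<phi> a * \<phi> b) \<and>
     (\<forall>a\<in>Rbd P. frac_le P (0, 1) a \<longrightarrow> \<phi> a \<ge> 0)}"

definition Ktop :: "('a::comm_ring_1) set \<Rightarrow> ('a \<times> 'a \<Rightarrow> real) topology" where
  "Ktop P = topology_generated_by
     {{\<phi> \<in> Kspace P. \<phi> a \<in> V} | a V. a \<in> Rbd P \<and> open V}"

definition O_fin :: "('a::comm_ring_1) set \<Rightarrow> 'a \<Rightarrow> ('a \<times> 'a \<Rightarrow> real) set" where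
  "O_fin P q = {\<phi> \<in> Kspace P. \<phi> (1, q) > 0}"

end

theory Submission
  imports Defs
begin

definition nzd :: "'a::comm_ring_1 \<Rightarrow> bool" where
  "nzd s \<longleftrightarrow> (\<forall>x. x * s = 0 \<longrightarrow> x = 0)"

lemma nzd_mult: "nzd a \<Longrightarrow> nzd b \<Longrightarrow> nzd (a * b)"
  unfolding nzd_def by (metis mult.assoc)

lemma nzd_one: "nzd 1"
  unfolding nzd_def by simp

definition qrel :: "'a::comm_ring_1 \<times> 'a \<Rightarrow> 'a \<times> 'a \<Rightarrow> bool" where
  "qrel = (\<lambda>x y. nzd (snd x) \<and> nzd (snd y) \<and> fst x * snd y = fst y * snd x)"

lemma qrel_iff [simp]:
  "qrel x y \<longleftrightarrow> nzd (snd x) \<and> nzd (snd y) \<and> fst x * snd y = fst y * snd x"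
  by (simp add: qrel_def)

lemma transp_qrel: "transp (qrel :: 'a::comm_ring_1 \<times> 'a \<Rightarrow> _)"
proof (rule transpI, unfold split_paired_all)
  fix a b a' b' a'' b'' :: 'a
  assume A: "qrel (a, b) (a', b')"
  assume B: "qrel (a', b') (a'', b'')"
  have e1: "a * b' = a' * b" and e2: "a' * b'' = a'' * b'" using A B by auto
  have z: "(a * b'' - a'' * b) * b' = 0"
  proof -
    have "(a * b'' - a'' * b) * b' = b'' * (a * b') - b * (a'' * b')" by (simp add: algebra_simps)
    also have "\<dots> = b'' * (a' * b) - b * (a' * b'')" by (simp add: e1 e2)
    also have "\<dots> = 0" by (simp add: algebra_simps)
    finally show ?thesis .
  qed
  have "nzd b'" using A by simp
  with z have "a * b'' - a'' * b = 0" unfolding nzd_def by blast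
  then have "a * b'' = a'' * b" by simp
  with A B show "qrel (a, b) (a'', b'')" by auto
qed

lemma part_equivp_qrel: "part_equivp (qrel :: 'a::comm_ring_1 \<times> 'a \<Rightarrow> _)"
  by (rule part_equivpI) (auto intro!: exI[where x="(0,1)"] exI[where x=1] simp: nzd_one symp_def transp_qrel)

quotient_type (overloaded) 'a qfrac = "'a :: comm_ring_1 \<times> 'a" / partial: "qrel"
  by (rule part_equivp_qrel)

lift_definition QF :: "'a :: comm_ring_1 \<Rightarrow> 'a \<Rightarrow> 'a qfrac"
  is "\<lambda>a b. if nzd b then (a, b) else (0, 1)"
  by (simp add: nzd_one)

lemma QF_cases [cases type: qfrac]:
  obtains (QF) a b where "q = QF a b" "nzd b"
  by transfer auto

lemma eq_QF:
  "nzd b \<Longrightarrow> nzd d \<Longrightarrow> QF a b = QF c d \<longleftrightarrow> a * d = c * b"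
  by transfer simp

instantiation qfrac :: (comm_ring_1) comm_ring_1
begin

lift_definition zero_qfrac :: "'a qfrac" is "(0, 1)" by (simp add: nzd_one)
lift_definition one_qfrac :: "'a qfrac" is "(1, 1)" by (simp add: nzd_one)

lemma Zero_QF: "0 = QF 0 1" by transfer (simp add: nzd_one)
lemma One_QF: "1 = QF 1 1" by transfer (simp add: nzd_one)

lift_definition plus_qfrac :: "'a qfrac \<Rightarrow> 'a qfrac \<Rightarrow> 'a qfrac"
  is "\<lambda>q r. (fst q * snd r + fst r * snd q, snd q * snd r)"
proof (unfold split_paired_all, simp add: nzd_mult, elim conjE)
  fix a b c d a' b' c' d' :: 'a
  assume e1: "a * b' = a' * b" and e2: "c * d' = c' * d"
  have "(a * d + c * b) * (b' * d') = (a * b') * (d * d') + (c * d') * (b * b')" by (simp add: algebra_simps)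
  also have "\<dots> = (a' * b) * (d * d') + (c' * d) * (b * b')" by (simp add: e1 e2)
  also have "\<dots> = (a' * d' + c' * b') * (b * d)" by (simp add: algebra_simps)
  finally show "(a * d + c * b) * (b' * d') = (a' * d' + c' * b') * (b * d)" .
qed

lemma add_QF [simp]:
  "nzd b \<Longrightarrow> nzd d \<Longrightarrow> QF a b + QF c d = QF (a * d + c * b) (b * d)"
  by transfer (simp add: nzd_mult)

lift_definition uminus_qfrac :: "'a qfrac \<Rightarrow> 'a qfrac"
  is "\<lambda>x. (- fst x, snd x)" by simp

lemma minus_QF [simp]: "nzd b \<Longrightarrow> - QF a b = QF (- a) b"
  by transfer simp

definition diff_qfrac_def: "q - r = q + - (r::'a qfrac)"

lift_definition times_qfrac :: "'a qfrac \<Rightarrow> 'a qfrac \<Rightarrow> 'a qfrac"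
  is "\<lambda>q r. (fst q * fst r, snd q * snd r)"
proof (unfold split_paired_all, simp add: nzd_mult, elim conjE)
  fix a b c d a' b' c' d' :: 'a
  assume e1: "a * b' = a' * b" and e2: "c * d' = c' * d"
  have "(a * c) * (b' * d') = (a * b') * (c * d')" by (simp add: algebra_simps)
  also have "\<dots> = (a' * b) * (c' * d)" by (simp add: e1 e2)
  also have "\<dots> = (a' * c') * (b * d)" by (simp add: algebra_simps)
  finally show "(a * c) * (b' * d') = (a' * c') * (b * d)" .
qed

lemma mult_QF [simp]: "nzd b \<Longrightarrow> nzd d \<Longrightarrow> QF a b * QF c d = QF (a * c) (b * d)"
  by transfer (simp add: nzd_mult)

instance
proof
  fix q r s :: "'a qfrac"
  show "(q * r) * s = q * (r * s)"
    by (cases q, cases r, cases s) (simp add: eq_QF nzd_mult algebra_simps)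
  show "q * r = r * q"
    by (cases q, cases r) (simp add: eq_QF nzd_mult algebra_simps)
  show "1 * q = q"
    by (cases q) (simp add: One_QF eq_QF nzd_one)
  show "(q + r) + s = q + (r + s)"
    by (cases q, cases r, cases s) (simp add: eq_QF nzd_mult algebra_simps)
  show "q + r = r + q"
    by (cases q, cases r) (simp add: eq_QF nzd_mult algebra_simps)
  show "0 + q = q"
    by (cases q) (simp add: Zero_QF eq_QF nzd_one)
  show "- q + q = 0"
    by (cases q) (simp add: Zero_QF eq_QF nzd_one nzd_mult)
  show "q - r = q + - r"
    by (simp add: diff_qfrac_def)
  show "(q + r) * s = q * s + r * s"
    by (cases q, cases r, cases s) (simp add: eq_QF nzd_mult algebra_simps)
  show "(0::'a qfrac) \<noteq> 1"
    by (simp add: Zero_QF One_QF eq_QF nzd_one)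
qed

end

lemma diff_QF [simp]:
  "nzd b \<Longrightarrow> nzd d \<Longrightarrow> QF a b - QF c d = QF (a * d - c * b) (b * d)"
  by (simp add: diff_qfrac_def algebra_simps)

lemma of_nat_QF: "of_nat k = QF (of_nat k) 1"
  by (induct k) (simp_all add: Zero_QF One_QF nzd_one)

lemma of_int_QF: "of_int k = QF (of_int k) 1"
proof (cases "k \<ge> 0")
  case True then show ?thesis using of_nat_QF[of "nat k"] by simp
next
  case False
  then have "of_int k = - (of_nat (nat (-k)) :: 'a qfrac)" by simp
  also have "\<dots> = QF (of_int k) 1" using False by (simp add: of_nat_QF nzd_one)
  finally show ?thesis .
qed

lemma eq_approx:
  fixes a b K :: real
  assumes "\<And>N::nat. N > 0 \<Longrightarrow> \<bar>a - b\<bar> \<le> K / real N"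
  shows "a = b"
proof (rule ccontr)
  assume "a \<noteq> b"
  then have d: "\<bar>a - b\<bar> > 0" by simp
  obtain N :: nat where N: "K / \<bar>a - b\<bar> < real N" using reals_Archimedean2 by blast
  define M where "M = Suc N"
  have M: "M > 0" "K / \<bar>a - b\<bar> < real M" using N by (auto simp: M_def)
  then have "K < \<bar>a - b\<bar> * real M" using d by (simp add: divide_less_eq mult.commute)
  then have "K / real M < \<bar>a - b\<bar>" using M(1) by (simp add: divide_less_eq)
  with assms[OF M(1)] show False by simp
qed

lemma low_approx:
  fixes v :: real and N :: nat
  assumes "N > 0"
  shows "\<exists>a::int. real_of_int a / real N < v \<and> v - 1 / real N \<le> real_of_int a / real N"
proof -
  define a where "a = ceiling (real N * v) - 1"
  have "real_of_int a < real N * v" "real N * v \<le> real_of_int a + 1"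
    unfolding a_def by linarith+
  then show ?thesis using assms
    by (intro exI[of _ a]) (auto simp: divide_simps mult.commute)
qed

lemma up_approx:
  fixes v :: real and N :: nat
  assumes "N > 0"
  shows "\<exists>a::int. v < real_of_int a / real N \<and> real_of_int a / real N \<le> v + 1 / real N"
proof -
  define a where "a = floor (real N * v) + 1"
  have "real N * v < real_of_int a" "real_of_int a \<le> real N * v + 1"
    unfolding a_def by linarith+
  then show ?thesis using assms
    by (intro exI[of _ a]) (auto simp: divide_simps mult.commute)
qed

locale kdring =
  fixes A C :: "'b::comm_ring_1 set"
  assumes A_add: "x \<in> A \<Longrightarrow> y \<in> A \<Longrightarrow> x + y \<in> A"
    and A_mult: "x \<in> A \<Longrightarrow> y \<in> A \<Longrightarrow> x * y \<in> A"
    and A_uminus: "x \<in> A \<Longrightarrow> - x \<in> A"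
    and A_one: "1 \<in> A"
    and C_A: "C \<subseteq> A"
    and C_add: "x \<in> C \<Longrightarrow> y \<in> C \<Longrightarrow> x + y \<in> C"
    and C_mult: "x \<in> C \<Longrightarrow> y \<in> C \<Longrightarrow> x * y \<in> C"
    and C_sq: "x \<in> A \<Longrightarrow> x * x \<in> C"
    and unit: "x \<in> A \<Longrightarrow> \<exists>n::nat. of_nat n - x \<in> C"
    and divis: "x \<in> A \<Longrightarrow> n > 0 \<Longrightarrow> of_nat n * x \<in> C \<Longrightarrow> x \<in> C"
    and arch: "x \<in> A \<Longrightarrow> h \<in> A \<Longrightarrow> (\<forall>k::nat. k \<ge> 1 \<longrightarrow> of_nat k * x + h \<in> C) \<Longrightarrow> x \<in> C"
begin

lemma A_zero: "0 \<in> A"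
  using A_add[OF A_one A_uminus[OF A_one]] by simp

lemma A_diff: "x \<in> A \<Longrightarrow> y \<in> A \<Longrightarrow> x - y \<in> A"
  using A_add[of x "-y"] A_uminus[of y] by simp

lemma A_of_nat: "of_nat n \<in> A"
  by (induct n) (auto simp: A_zero A_one A_add)

lemma A_of_int: "of_int k \<in> A"
proof (cases "k \<ge> 0")
  case True
  then have "of_int k = (of_nat (nat k) :: 'b)" by simp
  then show ?thesis using A_of_nat by metis
next
  case False
  then have "of_int k = - (of_nat (nat (- k)) :: 'b)" by simp
  then show ?thesis using A_of_nat A_uminus by metis
qed

lemma C_zero: "0 \<in> C" using C_sq[OF A_zero] by simp
lemma C_one: "1 \<in> C" using C_sq[OF A_one] by simp
lemma C_of_nat: "of_nat n \<in> C"
  by (induct n) (auto simp: C_zero C_one C_add)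

definition chars :: "('b \<Rightarrow> real) set" where
  "chars = {\<psi>. \<psi> 1 = 1 \<and> (\<forall>x\<in>A. \<forall>y\<in>A. \<psi> (x + y) = \<psi> x + \<psi> y) \<and>
     (\<forall>x\<in>A. \<forall>y\<in>A. \<psi> (x * y) = \<psi> x * \<psi> y) \<and> (\<forall>x\<in>C. 0 \<le> \<psi> x)}"

lemma chars_zero: "\<psi> \<in> chars \<Longrightarrow> \<psi> 0 = 0"
proof -
  assume "\<psi> \<in> chars"
  then have "\<psi> (0 + 0) = \<psi> 0 + \<psi> 0" using A_zero unfolding chars_def by blast
  then show ?thesis by simp
qed

lemma chars_of_nat: "\<psi> \<in> chars \<Longrightarrow> \<psi> (of_nat n) = real n"
proof (induct n)
  case 0 then show ?case by (simp add: chars_zero)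
next
  case (Suc n)
  then have "\<psi> (1 + of_nat n) = \<psi> 1 + \<psi> (of_nat n)" unfolding chars_def using A_one A_of_nat by blast
  then show ?case using Suc unfolding chars_def by simp
qed

definition preprime :: "'b set \<Rightarrow> bool" where
  "preprime T \<longleftrightarrow> T \<subseteq> A \<and> C \<subseteq> T \<and> (\<forall>x\<in>T. \<forall>y\<in>T. x + y \<in> T) \<and>
     (\<forall>x\<in>T. \<forall>y\<in>T. x * y \<in> T) \<and> - 1 \<notin> T"

lemma zorn_preprime:
  assumes "preprime T0"
  shows "\<exists>T. preprime T \<and> T0 \<subseteq> T \<and> (\<forall>T'. preprime T' \<and> T \<subseteq> T' \<longrightarrow> T' = T)"
proof -
  let ?S = "{T. preprime T \<and> T0 \<subseteq> T}"
  have "\<forall>Ch\<in>chains ?S. \<exists>U\<in>?S. \<forall>X\<in>Ch. X \<subseteq> U"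
  proof
    fix Ch assume Ch: "Ch \<in> chains ?S"
    show "\<exists>U\<in>?S. \<forall>X\<in>Ch. X \<subseteq> U"
    proof (cases "Ch = {}")
      case True
      have "T0 \<in> ?S" using assms by simp
      then show ?thesis using True by blast
    next
      case False
      have sub: "Ch \<subseteq> ?S" and ch: "\<forall>X\<in>Ch. \<forall>Y\<in>Ch. X \<subseteq> Y \<or> Y \<subseteq> X"
        using Ch unfolding chains_def chain_subset_def by auto
      have "preprime (\<Union>Ch)"
        unfolding preprime_def
      proof (intro conjI ballI)
        have pZ: "\<And>Z. Z \<in> Ch \<Longrightarrow> preprime Z" using sub by blast
        show "\<Union>Ch \<subseteq> A"
        proof
          fix x assume "x \<in> \<Union>Ch"
          then obtain Z where "Z \<in> Ch" "x \<in> Z" by blast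
          with pZ[OF this(1)] show "x \<in> A" unfolding preprime_def by blast
        qed
        obtain Z where "Z \<in> Ch" using False by blast
        with pZ[OF this] show "C \<subseteq> \<Union>Ch" unfolding preprime_def by blast
        show "-1 \<notin> \<Union>Ch"
        proof
          assume "-1 \<in> \<Union>Ch"
          then obtain Z where "Z \<in> Ch" "-1 \<in> Z" by blast
          with pZ[OF this(1)] show False unfolding preprime_def by blast
        qed
      next
        fix x y assume "x \<in> \<Union>Ch" "y \<in> \<Union>Ch"
        then obtain X Y where XY: "X \<in> Ch" "Y \<in> Ch" "x \<in> X" "y \<in> Y" by blast
        then have "X \<subseteq> Y \<or> Y \<subseteq> X" using ch by blast
        then obtain Z where Z: "Z \<in> Ch" "x \<in> Z" "y \<in> Z" using XY by blast
        then have "preprime Z" using sub by blast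
        then show "x + y \<in> \<Union>Ch" "x * y \<in> \<Union>Ch" using Z unfolding preprime_def by blast+
      qed
      moreover have "T0 \<subseteq> \<Union>Ch"
      proof -
        obtain Z where "Z \<in> Ch" using False by blast
        moreover then have "T0 \<subseteq> Z" using sub by blast
        ultimately show ?thesis by blast
      qed
      ultimately show ?thesis by blast
    qed
  qed
  from Zorn_Lemma2[OF this] obtain M where M: "M \<in> ?S" "\<forall>X\<in>?S. M \<subseteq> X \<longrightarrow> X = M" by blast
  have "\<forall>T'. preprime T' \<and> M \<subseteq> T' \<longrightarrow> T' = M"
  proof (intro allI impI)
    fix T' assume "preprime T' \<and> M \<subseteq> T'"
    moreover have "T0 \<subseteq> M" using M(1) by simp
    ultimately have "T' \<in> ?S" "M \<subseteq> T'" by auto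
    then show "T' = M" using M(2) by blast
  qed
  moreover have "preprime M" "T0 \<subseteq> M" using M(1) by auto
  ultimately show ?thesis by blast
qed

definition ext :: "'b set \<Rightarrow> 'b \<Rightarrow> 'b set" where
  "ext T x = {t1 + x * t2 | t1 t2. t1 \<in> T \<and> t2 \<in> T}"

lemma maximal_total:
  assumes T: "preprime T" and max: "\<forall>T'. preprime T' \<and> T \<subseteq> T' \<longrightarrow> T' = T"
    and x: "x \<in> A"
  shows "x \<in> T \<or> - x \<in> T"
proof -
  have T0: "0 \<in> T" and T1: "1 \<in> T" using T C_zero C_one unfolding preprime_def by auto
  have key: "- 1 \<in> ext T y" if y: "y \<in> A" "y \<notin> T" for y
  proof (rule ccontr)
    assume n: "- 1 \<notin> ext T y"
    have yy: "y * y \<in> T" using C_sq[OF y(1)] T unfolding preprime_def by auto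
    have "preprime (ext T y)"
      unfolding preprime_def
    proof (intro conjI ballI)
      show "ext T y \<subseteq> A" using T y unfolding ext_def preprime_def by (auto intro!: A_add A_mult)
      show "C \<subseteq> ext T y"
      proof
        fix c assume "c \<in> C"
        then have "c = c + y * 0" "c \<in> T" "0 \<in> T" using T T0 unfolding preprime_def by auto
        then show "c \<in> ext T y" unfolding ext_def by blast
      qed
      show "- 1 \<notin> ext T y" by (rule n)
    next
      fix a b assume "a \<in> ext T y" "b \<in> ext T y"
      then obtain t1 t2 t3 t4 where t: "a = t1 + y * t2" "b = t3 + y * t4" "t1 \<in> T" "t2 \<in> T" "t3 \<in> T" "t4 \<in> T"
        unfolding ext_def by blast
      have "a + b = (t1 + t3) + y * (t2 + t4)" using t by (simp add: algebra_simps)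
      moreover have "t1 + t3 \<in> T" "t2 + t4 \<in> T" using t T unfolding preprime_def by auto
      ultimately show "a + b \<in> ext T y" unfolding ext_def by blast
      have "a * b = (t1 * t3 + (y * y) * (t2 * t4)) + y * (t1 * t4 + t2 * t3)" using t by (simp add: algebra_simps)
      moreover have "t1 * t3 + (y * y) * (t2 * t4) \<in> T" "t1 * t4 + t2 * t3 \<in> T"
        using t T yy unfolding preprime_def by auto
      ultimately show "a * b \<in> ext T y" unfolding ext_def by blast
    qed
    moreover have "T \<subseteq> ext T y"
    proof
      fix c assume "c \<in> T"
      then have "c = c + y * 0" by simp
      then show "c \<in> ext T y" using \<open>c \<in> T\<close> T0 unfolding ext_def by blast
    qed
    ultimately have "ext T y = T" using max by blast
    moreover have "y \<in> ext T y"
    proof -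
      have "y = 0 + y * 1" by simp
      then show ?thesis unfolding ext_def using T0 T1 by blast
    qed
    ultimately show False using y by blast
  qed
  show ?thesis
  proof (rule ccontr)
    assume "\<not> (x \<in> T \<or> - x \<in> T)"
    then have "- 1 \<in> ext T x" "- 1 \<in> ext T (- x)" using key x A_uminus by auto
    then obtain t1 t2 t3 t4 where t: "- 1 = t1 + x * t2" "- 1 = t3 + (- x) * t4"
      "t1 \<in> T" "t2 \<in> T" "t3 \<in> T" "t4 \<in> T" unfolding ext_def by blast
    have "- 1 = t1 + t3 + t1 * t3 + (x * x) * (t2 * t4)"
    proof -
      have e1: "t1 = - 1 - x * t2" and e2: "t3 = - 1 + x * t4" using t(1,2) by (simp_all add: algebra_simps)
      show ?thesis unfolding e1 e2 by (simp add: algebra_simps)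
    qed
    moreover have "t1 + t3 + t1 * t3 + (x * x) * (t2 * t4) \<in> T"
    proof -
      have cl: "\<And>a b. a \<in> T \<Longrightarrow> b \<in> T \<Longrightarrow> a + b \<in> T" "\<And>a b. a \<in> T \<Longrightarrow> b \<in> T \<Longrightarrow> a * b \<in> T"
        and xx: "x * x \<in> T" using T C_sq[OF x] unfolding preprime_def by blast+
      show ?thesis by (intro cl t xx)
    qed
    ultimately show False using T unfolding preprime_def by metis
  qed
qed

end

lemma prod_lower:
  fixes p q u w e :: real
  assumes "0 \<le> p" "0 \<le> q" "0 \<le> u" "0 \<le> w" "p - e \<le> u" "q - e \<le> w" "0 \<le> e"
  shows "p * q - e * (p + q) \<le> u * w"
proof (cases "p - e \<ge> 0 \<and> q - e \<ge> 0")
  case True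
  then have "(p - e) * (q - e) \<le> u * w" using assms by (intro mult_mono) auto
  moreover have "(p - e) * (q - e) = p * q - e * (p + q) + e * e" by (simp add: algebra_simps)
  moreover have "e * e \<ge> 0" by simp
  ultimately show ?thesis by linarith
next
  case False
  have "u * w \<ge> 0" using assms by simp
  moreover have "p * q - e * (p + q) \<le> 0"
  proof (cases "p < e")
    case True
    then have "p * q \<le> e * q" using assms by (intro mult_right_mono) auto
    moreover have "e * p \<ge> 0" using assms by simp
    ultimately show ?thesis by (simp add: algebra_simps)
  next
    case False2: False
    then have "q < e" using False by linarith
    then have "p * q \<le> p * e" using assms by (intro mult_left_mono) auto
    moreover have "e * q \<ge> 0" using assms by simp
    ultimately show ?thesis by (simp add: algebra_simps)
  qed
  ultimately show ?thesis by linarith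
qed

lemma prod_upper:
  fixes p q u w e :: real
  assumes "0 \<le> p" "0 \<le> q" "0 \<le> u" "0 \<le> w" "u \<le> p + e" "w \<le> q + e" "0 \<le> e" "e \<le> 1"
  shows "u * w \<le> p * q + e * (p + q + 1)"
proof -
  have "u * w \<le> (p + e) * (q + e)" using assms by (intro mult_mono) auto
  moreover have "(p + e) * (q + e) = p * q + e * (p + q) + e * e" by (simp add: algebra_simps)
  moreover have "e * e \<le> e" using assms by (simp add: mult_left_le)
  ultimately show ?thesis by (simp add: algebra_simps)
qed

locale kdtot = kdring A C for A C :: "'b::comm_ring_1 set" +
  fixes T :: "'b set"
  assumes pp: "preprime T" and tot: "x \<in> A \<Longrightarrow> x \<in> T \<or> - x \<in> T"
begin

lemma T_A: "x \<in> T \<Longrightarrow> x \<in> A" using pp unfolding preprime_def by blast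
lemma T_C: "x \<in> C \<Longrightarrow> x \<in> T" using pp unfolding preprime_def by blast
lemma T_add: "x \<in> T \<Longrightarrow> y \<in> T \<Longrightarrow> x + y \<in> T" using pp unfolding preprime_def by blast
lemma T_mult: "x \<in> T \<Longrightarrow> y \<in> T \<Longrightarrow> x * y \<in> T" using pp unfolding preprime_def by blast
lemma T_neg1: "- 1 \<notin> T" using pp unfolding preprime_def by blast
lemma T_of_nat: "of_nat n \<in> T" using T_C C_of_nat by blast
lemma T_of_int: "k \<ge> 0 \<Longrightarrow> of_int k \<in> T"
proof -
  assume "k \<ge> 0"
  then have "of_int k = (of_nat (nat k) :: 'b)" by simp
  then show ?thesis using T_of_nat by simp
qed

lemma T_int: "of_int k \<in> T \<Longrightarrow> 0 \<le> k"
proof (rule ccontr)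
  assume k: "of_int k \<in> T" "\<not> 0 \<le> k"
  then have "- 1 = of_int k + (of_int (- k - 1) :: 'b)" by simp
  moreover have "of_int (- k - 1) \<in> T" using k by (intro T_of_int) simp
  ultimately have "of_int k + (of_int (- k - 1) :: 'b) \<in> T" using T_add k(1) by blast
  then have "(- 1 :: 'b) \<in> T" by (simp only: \<open>- 1 = of_int k + (of_int (- k - 1) :: 'b)\<close>[symmetric])
  then show False using T_neg1 by blast
qed

lemma LU:
  assumes "n > 0" "n' > 0" "of_nat n * x - of_int m \<in> T" "of_int m' - of_nat n' * x \<in> T"
  shows "real_of_int m / real n \<le> real_of_int m' / real n'"
proof -
  have eq: "of_nat n' * (of_nat n * x - of_int m) + of_nat n * (of_int m' - of_nat n' * x)
        = (of_int (int n * m' - int n' * m) :: 'b)" by (simp add: algebra_simps)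
  have "of_nat n' * (of_nat n * x - of_int m) + of_nat n * (of_int m' - of_nat n' * x) \<in> T"
    using assms by (intro T_add T_mult T_of_nat) auto
  then have "(of_int (int n * m' - int n' * m) :: 'b) \<in> T" by (simp only: eq)
  then have "0 \<le> int n * m' - int n' * m" by (rule T_int)
  then have "int n' * m \<le> int n * m'" by linarith
  then have "real_of_int (int n' * m) \<le> real_of_int (int n * m')" by (simp only: of_int_le_iff)
  then have "real n' * real_of_int m \<le> real n * real_of_int m'" by simp
  then show ?thesis using assms(1,2) by (simp add: divide_simps mult.commute)
qed

definition Lset :: "'b \<Rightarrow> real set" where
  "Lset x = {real_of_int m / real n | m n. n > 0 \<and> of_nat n * x - of_int m \<in> T}"

definition val :: "'b \<Rightarrow> real" where
  "val x = Sup (Lset x)"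

lemma Lset_ne: "x \<in> A \<Longrightarrow> Lset x \<noteq> {}"
proof -
  assume x: "x \<in> A"
  obtain N :: nat where "of_nat N - (- x) \<in> C" using unit[OF A_uminus[OF x]] by blast
  then have "of_nat 1 * x - of_int (- int N) \<in> T" using T_C by (simp add: algebra_simps)
  then show ?thesis unfolding Lset_def by blast
qed

lemma Lset_bdd: "x \<in> A \<Longrightarrow> bdd_above (Lset x)"
proof -
  assume x: "x \<in> A"
  obtain N :: nat where "of_nat N - x \<in> C" using unit[OF x] by blast
  then have N: "of_int (int N) - of_nat 1 * x \<in> T" using T_C by simp
  show ?thesis unfolding bdd_above_def Lset_def
  proof (intro exI[of _ "real_of_int (int N) / real (1::nat)"] ballI)
    fix l assume "l \<in> {real_of_int m / real n | m n. n > 0 \<and> of_nat n * x - of_int m \<in> T}"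
    then obtain m n where "l = real_of_int m / real n" "n > 0" "of_nat n * x - of_int m \<in> T" by blast
    then show "l \<le> real_of_int (int N) / real (1::nat)" using LU[OF _ _ _ N] by simp
  qed
qed

lemma val_L:
  assumes "x \<in> A" "n > 0" "of_nat n * x - of_int m \<in> T"
  shows "real_of_int m / real n \<le> val x"
  unfolding val_def using assms by (intro cSup_upper Lset_bdd) (auto simp: Lset_def)

lemma val_U:
  assumes "x \<in> A" "n > 0" "of_int m - of_nat n * x \<in> T"
  shows "val x \<le> real_of_int m / real n"
  unfolding val_def
proof (rule cSup_least)
  show "Lset x \<noteq> {}" using Lset_ne assms by blast
  fix l assume "l \<in> Lset x"
  then obtain m' n' where "l = real_of_int m' / real n'" "n' > 0" "of_nat n' * x - of_int m' \<in> T"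
    unfolding Lset_def by blast
  then show "l \<le> real_of_int m / real n" using LU[OF _ assms(2) _ assms(3)] by simp
qed

lemma below:
  assumes "x \<in> A" "n > 0" "real_of_int m / real n < val x"
  shows "of_nat n * x - of_int m \<in> T"
proof (rule ccontr)
  assume "of_nat n * x - of_int m \<notin> T"
  moreover have "of_nat n * x - of_int m \<in> A" using assms by (intro A_diff A_mult A_of_nat A_of_int)
  ultimately have "- (of_nat n * x - of_int m) \<in> T" using tot by blast
  then have "of_int m - of_nat n * x \<in> T" by simp
  then have "val x \<le> real_of_int m / real n" using val_U assms by blast
  then show False using assms by linarith
qed

lemma above:
  assumes "x \<in> A" "n > 0" "val x < real_of_int m / real n"
  shows "of_int m - of_nat n * x \<in> T"
proof (rule ccontr)
  assume "of_int m - of_nat n * x \<notin> T"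
  moreover have "of_int m - of_nat n * x \<in> A" using assms by (intro A_diff A_mult A_of_nat A_of_int)
  ultimately have "- (of_int m - of_nat n * x) \<in> T" using tot by blast
  then have "of_nat n * x - of_int m \<in> T" by simp
  then have "real_of_int m / real n \<le> val x" using val_L assms by blast
  then show False using assms by linarith
qed

lemma val_add:
  assumes x: "x \<in> A" and y: "y \<in> A"
  shows "val (x + y) = val x + val y"
proof (rule eq_approx[where K = 2])
  fix N :: nat assume N: "N > 0"
  have xy: "x + y \<in> A" using x y by (rule A_add)
  obtain a where a: "real_of_int a / real N < val x" "val x - 1 / real N \<le> real_of_int a / real N"
    using low_approx[OF N] by blast
  obtain b where b: "real_of_int b / real N < val y" "val y - 1 / real N \<le> real_of_int b / real N"
    using low_approx[OF N] by blast
  have "of_nat N * x - of_int a + (of_nat N * y - of_int b) \<in> T"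
    using below[OF x N a(1)] below[OF y N b(1)] by (rule T_add)
  then have "of_nat N * (x + y) - of_int (a + b) \<in> T" by (simp add: algebra_simps)
  then have l: "real_of_int (a + b) / real N \<le> val (x + y)" using val_L[OF xy N] by blast
  obtain c where c: "val x < real_of_int c / real N" "real_of_int c / real N \<le> val x + 1 / real N"
    using up_approx[OF N] by blast
  obtain d where d: "val y < real_of_int d / real N" "real_of_int d / real N \<le> val y + 1 / real N"
    using up_approx[OF N] by blast
  have "of_int c - of_nat N * x + (of_int d - of_nat N * y) \<in> T"
    using above[OF x N c(1)] above[OF y N d(1)] by (rule T_add)
  then have "of_int (c + d) - of_nat N * (x + y) \<in> T" by (simp add: algebra_simps)
  then have u: "val (x + y) \<le> real_of_int (c + d) / real N" using val_U[OF xy N] by blast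
  have "real_of_int (a + b) / real N = real_of_int a / real N + real_of_int b / real N"
       "real_of_int (c + d) / real N = real_of_int c / real N + real_of_int d / real N"
    by (simp_all add: add_divide_distrib)
  then show "\<bar>val (x + y) - (val x + val y)\<bar> \<le> 2 / real N"
    using a b c d l u by (simp add: abs_le_iff)
qed

lemma val_of_int: "val (of_int k) = real_of_int k"
proof -
  have T0: "(0::'b) \<in> T" using T_C C_zero by blast
  have "of_nat 1 * of_int k - of_int k \<in> T" "of_int k - of_nat 1 * of_int k \<in> T"
    using T0 by simp_all
  then have "real_of_int k / real (1::nat) \<le> val (of_int k)" "val (of_int k) \<le> real_of_int k / real (1::nat)"
    using val_L[where x="of_int k" and n=1 and m=k] val_U[where x="of_int k" and n=1 and m=k] A_of_int by simp_all
  then show ?thesis by simp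
qed

lemma val_of_nat: "val (of_nat k) = real k"
  using val_of_int[of "int k"] by simp

lemma val_nonneg: "x \<in> T \<Longrightarrow> 0 \<le> val x"
proof -
  assume x: "x \<in> T"
  then have "of_nat 1 * x - of_int 0 \<in> T" by simp
  from val_L[OF T_A[OF x] _ this] show ?thesis by simp
qed

lemma val_neg: "x \<in> A \<Longrightarrow> val (- x) = - val x"
proof -
  assume x: "x \<in> A"
  have "val (x + - x) = val x + val (- x)" using val_add[OF x A_uminus[OF x]] .
  moreover have "val (x + - x) = 0" using val_of_int[of 0] by simp
  ultimately show ?thesis by linarith
qed

lemma val_nat_mult: "x \<in> A \<Longrightarrow> val (of_nat n * x) = real n * val x"
proof (induct n)
  case 0 then show ?case using val_of_int[of 0] by simp
next
  case (Suc n)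
  have "of_nat (Suc n) * x = x + of_nat n * x" by (simp add: algebra_simps)
  moreover have "val (x + of_nat n * x) = val x + val (of_nat n * x)"
    using val_add[OF Suc(2) A_mult[OF A_of_nat Suc(2)]] .
  ultimately show ?case using Suc by (simp add: algebra_simps)
qed

lemma val_mult_T:
  assumes x: "x \<in> T" and y: "y \<in> T"
  shows "val (x * y) = val x * val y"
proof (rule eq_approx[where K = "val x + val y + 1"])
  fix N :: nat assume N: "N > 0"
  have xA: "x \<in> A" and yA: "y \<in> A" using x y T_A by auto
  have xyA: "x * y \<in> A" using xA yA by (rule A_mult)
  have vx: "0 \<le> val x" and vy: "0 \<le> val y" using val_nonneg x y by auto
  have NN: "N * N > 0" using N by simp
  define e where "e = 1 / real N"
  have e: "0 \<le> e" "e \<le> 1" using N by (auto simp: e_def)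
  have lowpos: "\<exists>a::int. 0 \<le> a \<and> of_nat N * z - of_int a \<in> T \<and> val z - e \<le> real_of_int a / real N"
    if z: "z \<in> T" for z
  proof -
    obtain a0 where a0: "real_of_int a0 / real N < val z" "val z - 1 / real N \<le> real_of_int a0 / real N"
      using low_approx[OF N] by blast
    show ?thesis
    proof (cases "a0 \<le> 0")
      case True
      have "of_nat N * z - of_int 0 \<in> T" using z T_mult T_of_nat by simp
      moreover have "val z - e \<le> real_of_int 0 / real N"
      proof -
        have "real_of_int a0 / real N \<le> 0" using True N by (simp add: divide_nonpos_pos)
        then show ?thesis using a0(2) unfolding e_def by simp
      qed
      ultimately show ?thesis by blast
    next
      case False
      then show ?thesis using below[OF T_A[OF z] N a0(1)] a0(2) unfolding e_def
        by (intro exI[of _ a0]) auto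
    qed
  qed
  obtain a where a: "0 \<le> a" "of_nat N * x - of_int a \<in> T" "val x - e \<le> real_of_int a / real N"
    using lowpos[OF x] by blast
  obtain b where b: "0 \<le> b" "of_nat N * y - of_int b \<in> T" "val y - e \<le> real_of_int b / real N"
    using lowpos[OF y] by blast
  have "(of_nat N * x - of_int a) * (of_nat N * y) + of_int a * (of_nat N * y - of_int b) \<in> T"
    using a b y by (intro T_add T_mult T_of_nat T_of_int) auto
  moreover have "(of_nat N * x - of_int a) * (of_nat N * y) + of_int a * (of_nat N * y - of_int b)
      = of_nat (N * N) * (x * y) - (of_int (a * b) :: 'b)" by (simp add: algebra_simps)
  ultimately have "of_nat (N * N) * (x * y) - (of_int (a * b) :: 'b) \<in> T" by simp
  then have l: "real_of_int (a * b) / real (N * N) \<le> val (x * y)" using val_L[OF xyA NN] by blast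
  have ab: "real_of_int (a * b) / real (N * N) = (real_of_int a / real N) * (real_of_int b / real N)" by simp
  have l2: "val x * val y - e * (val x + val y) \<le> (real_of_int a / real N) * (real_of_int b / real N)"
    using a b vx vy e N by (intro prod_lower) auto
  obtain c where c: "val x < real_of_int c / real N" "real_of_int c / real N \<le> val x + 1 / real N"
    using up_approx[OF N] by blast
  obtain d where d: "val y < real_of_int d / real N" "real_of_int d / real N \<le> val y + 1 / real N"
    using up_approx[OF N] by blast
  have c0: "0 \<le> c"
  proof (rule ccontr)
    assume "\<not> 0 \<le> c"
    then have "real_of_int c / real N \<le> 0" using N by (simp add: divide_nonpos_pos)
    then show False using c(1) vx by linarith
  qed
  have d0: "0 \<le> d"
  proof (rule ccontr)
    assume "\<not> 0 \<le> d"
    then have "real_of_int d / real N \<le> 0" using N by (simp add: divide_nonpos_pos)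
    then show False using d(1) vy by linarith
  qed
  have "of_int d * (of_int c - of_nat N * x) + (of_nat N * x) * (of_int d - of_nat N * y) \<in> T"
    using above[OF xA N c(1)] above[OF yA N d(1)] c0 d0 x by (intro T_add T_mult T_of_nat T_of_int) auto
  moreover have "of_int d * (of_int c - of_nat N * x) + (of_nat N * x) * (of_int d - of_nat N * y)
      = (of_int (c * d) :: 'b) - of_nat (N * N) * (x * y)" by (simp add: algebra_simps)
  ultimately have "(of_int (c * d) :: 'b) - of_nat (N * N) * (x * y) \<in> T" by simp
  then have u: "val (x * y) \<le> real_of_int (c * d) / real (N * N)" using val_U[OF xyA NN] by blast
  have cd: "real_of_int (c * d) / real (N * N) = (real_of_int c / real N) * (real_of_int d / real N)" by simp
  have u2: "(real_of_int c / real N) * (real_of_int d / real N) \<le> val x * val y + e * (val x + val y + 1)"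
    using c d c0 d0 vx vy e N unfolding e_def by (intro prod_upper) auto
  have "e * (val x + val y) \<le> e * (val x + val y + 1)" using e by (simp add: mult_left_mono)
  then have "\<bar>val (x * y) - val x * val y\<bar> \<le> e * (val x + val y + 1)"
    using l ab l2 u cd u2 by (simp add: abs_le_iff)
  then show "\<bar>val (x * y) - val x * val y\<bar> \<le> (val x + val y + 1) / real N"
    unfolding e_def by simp
qed

lemma val_mult:
  assumes x: "x \<in> A" and y: "y \<in> A"
  shows "val (x * y) = val x * val y"
proof -
  obtain n1 :: nat where "of_nat n1 - (- x) \<in> C" using unit[OF A_uminus[OF x]] by blast
  then have x1: "x + of_nat n1 \<in> T" using T_C by (simp add: algebra_simps)
  obtain n2 :: nat where "of_nat n2 - (- y) \<in> C" using unit[OF A_uminus[OF y]] by blast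
  then have y1: "y + of_nat n2 \<in> T" using T_C by (simp add: algebra_simps)
  have vx1: "val (x + of_nat n1) = val x + real n1" using val_add[OF x A_of_nat] val_of_nat by simp
  have vy1: "val (y + of_nat n2) = val y + real n2" using val_add[OF y A_of_nat] val_of_nat by simp
  have xy: "x * y \<in> A" "of_nat n2 * x \<in> A" "of_nat n1 * y \<in> A" "of_nat (n1 * n2) \<in> A"
    using x y by (auto intro!: A_mult A_of_nat)
  have eq: "(x + of_nat n1) * (y + of_nat n2) = x * y + (of_nat n2 * x + (of_nat n1 * y + of_nat (n1 * n2)))"
    by (simp add: algebra_simps)
  have "val ((x + of_nat n1) * (y + of_nat n2)) = val (x * y) + (real n2 * val x + (real n1 * val y + real (n1 * n2)))"
    unfolding eq using xy
    by (simp add: val_add A_add val_nat_mult[OF x] val_nat_mult[OF y] val_of_nat val_nat_mult[OF A_of_nat])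
  moreover have "val ((x + of_nat n1) * (y + of_nat n2)) = (val x + real n1) * (val y + real n2)"
    using val_mult_T[OF x1 y1] vx1 vy1 by simp
  ultimately show ?thesis by (simp add: algebra_simps)
qed

lemma val_chars: "val \<in> chars"
  unfolding chars_def
  using val_of_nat[of 1] val_add val_mult val_nonneg T_C by auto

end

context kdring
begin

lemma psatz:
  assumes b: "b \<in> A" and np: "\<not> (\<exists>p\<in>C. \<exists>t\<in>C. p * b = 1 + t)"
  shows "\<exists>\<psi>\<in>chars. \<psi> b \<le> 0"
proof -
  define T0 where "T0 = {c1 - b * c2 | c1 c2. c1 \<in> C \<and> c2 \<in> C}"
  have "preprime T0"
    unfolding preprime_def
  proof (intro conjI ballI)
    show "T0 \<subseteq> A" using b C_A unfolding T0_def by (auto intro!: A_diff A_mult)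
    show "C \<subseteq> T0"
    proof
      fix c assume "c \<in> C"
      then have "c = c - b * 0" "c \<in> C" "0 \<in> C" using C_zero by auto
      then show "c \<in> T0" unfolding T0_def by blast
    qed
    show "- 1 \<notin> T0"
    proof
      assume "- 1 \<in> T0"
      then obtain c1 c2 where c: "- 1 = c1 - b * c2" "c1 \<in> C" "c2 \<in> C" unfolding T0_def by blast
      then have "c2 * b = 1 + c1" by (simp add: algebra_simps)
      then show False using np c by blast
    qed
  next
    fix u v assume "u \<in> T0" "v \<in> T0"
    then obtain c1 c2 c3 c4 where c: "u = c1 - b * c2" "v = c3 - b * c4" "c1 \<in> C" "c2 \<in> C" "c3 \<in> C" "c4 \<in> C"
      unfolding T0_def by blast
    have "u + v = (c1 + c3) - b * (c2 + c4)" unfolding c(1,2) by (simp add: algebra_simps)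
    moreover have "c1 + c3 \<in> C" "c2 + c4 \<in> C" using c by (auto intro: C_add)
    ultimately show "u + v \<in> T0" unfolding T0_def by blast
    have "u * v = (c1 * c3 + (b * b) * (c2 * c4)) - b * (c1 * c4 + c2 * c3)" unfolding c(1,2) by (simp add: algebra_simps)
    moreover have "c1 * c3 + (b * b) * (c2 * c4) \<in> C" "c1 * c4 + c2 * c3 \<in> C"
      using c C_sq[OF b] by (auto intro!: C_add C_mult)
    ultimately show "u * v \<in> T0" unfolding T0_def by blast
  qed
  then obtain T where T: "preprime T" "T0 \<subseteq> T" "\<forall>T'. preprime T' \<and> T \<subseteq> T' \<longrightarrow> T' = T"
    using zorn_preprime by blast
  interpret kt: kdtot A C T
    using T maximal_total by unfold_locales auto
  have "- b \<in> T0"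
  proof -
    have "- b = 0 - b * 1" by simp
    then show ?thesis unfolding T0_def using C_zero C_one by blast
  qed
  then have "- b \<in> T" using T by blast
  then have "0 \<le> kt.val (- b)" by (rule kt.val_nonneg)
  then have "kt.val b \<le> 0" using kt.val_neg[OF b] by simp
  then show ?thesis using kt.val_chars by blast
qed

lemma pos_cert:
  assumes b: "b \<in> A" and p: "p \<in> C" and t: "t \<in> C" and pb: "p * b = 1 + t"
  shows "b \<in> C"
proof -
  obtain N0 :: nat where N0: "of_nat N0 - p \<in> C" using unit C_A p by blast
  define N where "N = Suc N0"
  have Np: "of_nat N - p \<in> C"
  proof -
    have eq: "of_nat N - p = (of_nat N0 - p) + 1" unfolding N_def by simp
    have "(of_nat N0 - p) + 1 \<in> C" by (rule C_add[OF N0 C_one])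
    then show ?thesis by (simp only: eq)
  qed
  have N: "N > 0" unfolding N_def by simp
  have NbA: "of_nat N * b \<in> A" using b by (intro A_mult A_of_nat)
  obtain i0 :: nat where "of_nat i0 - (- (of_nat N * b)) \<in> C" using unit[OF A_uminus[OF NbA]] by blast
  then have i0: "of_nat N * b + of_nat i0 \<in> C" by (simp add: algebra_simps)
  have step: "of_nat N * b + of_nat i \<in> C \<Longrightarrow> of_nat N * b \<in> C" for i
  proof (induct i)
    case 0 then show ?case by simp
  next
    case (Suc i)
    have eq: "(of_nat N * b + of_nat (Suc i)) * (of_nat N - p) + of_nat N * t + of_nat (Suc i) * p
       = of_nat N * (of_nat N * b + of_nat i) + of_nat N * (1 + t - p * b)"
      by (simp add: algebra_simps)
    have "(of_nat N * b + of_nat (Suc i)) * (of_nat N - p) + of_nat N * t + of_nat (Suc i) * p \<in> C"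
      using C_add[OF C_add[OF C_mult[OF Suc(2) Np] C_mult[OF C_of_nat t]] C_mult[OF C_of_nat p]] .
    then have "of_nat N * (of_nat N * b + of_nat i) \<in> C" unfolding eq using pb by simp
    moreover have "of_nat N * b + of_nat i \<in> A" using NbA by (intro A_add A_of_nat)
    ultimately have "of_nat N * b + of_nat i \<in> C" using divis N by blast
    then show ?case by (rule Suc(1))
  qed
  have "of_nat N * b \<in> C" using step[OF i0] .
  then show ?thesis using divis[OF b N] by blast
qed

theorem KD:
  assumes x: "x \<in> A" and pos: "\<forall>\<psi>\<in>chars. 0 \<le> \<psi> x"
  shows "x \<in> C"
proof (rule arch[OF x A_one], intro allI impI)
  fix j :: nat assume j: "j \<ge> 1"
  define b where "b = of_nat j * x + 1"
  have bA: "b \<in> A" unfolding b_def using x by (intro A_add A_mult A_of_nat A_one)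
  have "\<exists>p\<in>C. \<exists>t\<in>C. p * b = 1 + t"
  proof (rule ccontr)
    assume "\<not> (\<exists>p\<in>C. \<exists>t\<in>C. p * b = 1 + t)"
    then obtain \<psi> where \<psi>: "\<psi> \<in> chars" "\<psi> b \<le> 0" using psatz[OF bA] by blast
    have h: "\<psi> 1 = 1" "\<And>u v. u \<in> A \<Longrightarrow> v \<in> A \<Longrightarrow> \<psi> (u + v) = \<psi> u + \<psi> v"
      "\<And>u v. u \<in> A \<Longrightarrow> v \<in> A \<Longrightarrow> \<psi> (u * v) = \<psi> u * \<psi> v"
      using \<psi>(1) unfolding chars_def by auto
    have "\<psi> b = real j * \<psi> x + 1"
      unfolding b_def using h x A_of_nat A_mult A_one chars_of_nat[OF \<psi>(1)] by simp
    moreover have "0 \<le> \<psi> x" using pos \<psi>(1) by blast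
    moreover have "0 \<le> real j * \<psi> x" using \<open>0 \<le> \<psi> x\<close> by simp
    ultimately show False using \<psi>(2) by linarith
  qed
  then obtain p t where "p \<in> C" "t \<in> C" "p * b = 1 + t" by blast
  then show "of_nat j * x + 1 \<in> C" using pos_cert[OF bA] unfolding b_def by blast
qed

end

lemma po_add: "po_cring P \<Longrightarrow> x \<in> P \<Longrightarrow> y \<in> P \<Longrightarrow> x + y \<in> P"
  unfolding po_cring_def by blast
lemma po_mult: "po_cring P \<Longrightarrow> x \<in> P \<Longrightarrow> y \<in> P \<Longrightarrow> x * y \<in> P"
  unfolding po_cring_def by blast
lemma po_sq: "po_cring P \<Longrightarrow> x * x \<in> P"
  unfolding po_cring_def by blast
lemma po_antisym: "po_cring P \<Longrightarrow> x \<in> P \<Longrightarrow> - x \<in> P \<Longrightarrow> x = 0"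
  unfolding po_cring_def by blast
lemma po_zero: "po_cring P \<Longrightarrow> 0 \<in> P"
  using po_sq[of P 0] by simp
lemma po_one: "po_cring P \<Longrightarrow> 1 \<in> P"
  using po_sq[of P 1] by simp
lemma po_of_nat: "po_cring P \<Longrightarrow> of_nat n \<in> P"
  by (induct n) (auto simp: po_zero po_one po_add)
lemma po_nat_mult: "po_cring P \<Longrightarrow> x \<in> P \<Longrightarrow> of_nat n * x \<in> P"
  by (rule po_mult[OF _ po_of_nat])

lemma Loc_P: "po_cring P \<Longrightarrow> s \<in> Loc P \<Longrightarrow> s \<in> P"
proof -
  assume P: "po_cring P" and s: "s \<in> Loc P"
  have "(s - 1) + 1 \<in> P" using s P po_one po_add unfolding Loc_def by blast
  then show ?thesis by simp
qed

lemma Loc_cancel: "s \<in> Loc P \<Longrightarrow> r * s \<in> P \<Longrightarrow> r \<in> P"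
  unfolding Loc_def by blast

lemma Loc_nzd: "po_cring P \<Longrightarrow> s \<in> Loc P \<Longrightarrow> nzd s"
  unfolding nzd_def
proof (intro allI impI)
  fix x assume P: "po_cring P" and s: "s \<in> Loc P" and x: "x * s = 0"
  have "x \<in> P" using Loc_cancel[OF s] x po_zero[OF P] by simp
  moreover have "- x \<in> P" using Loc_cancel[OF s, of "- x"] x po_zero[OF P] by simp
  ultimately show "x = 0" using po_antisym[OF P] by blast
qed

lemma Loc_one: "po_cring P \<Longrightarrow> 1 \<in> Loc P"
  unfolding Loc_def using po_zero by auto

lemma Loc_mult: "po_cring P \<Longrightarrow> s \<in> Loc P \<Longrightarrow> t \<in> Loc P \<Longrightarrow> s * t \<in> Loc P"
proof -
  assume P: "po_cring P" and s: "s \<in> Loc P" and t: "t \<in> Loc P"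
  have "(s - 1) * (t - 1) + (s - 1) + (t - 1) \<in> P"
    using s t P unfolding Loc_def by (intro po_add po_mult) auto
  moreover have "(s - 1) * (t - 1) + (s - 1) + (t - 1) = s * t - 1" by (simp add: algebra_simps)
  ultimately have "s * t - 1 \<in> P" by simp
  moreover have "r \<in> P" if "r * (s * t) \<in> P" for r
  proof -
    have "(r * s) * t \<in> P" using that by (simp add: mult.assoc)
    then have "r * s \<in> P" by (rule Loc_cancel[OF t])
    then show ?thesis by (rule Loc_cancel[OF s])
  qed
  ultimately show ?thesis unfolding Loc_def by blast
qed

lemma div_R:
  assumes P: "po_cring P" and loc: "localizable P" and ar: "archimedean_po P"
    and n: "n > 0" and x: "of_nat n * x \<in> P"
  shows "x \<in> P"
proof -
  obtain s where s: "s \<in> Loc P" "pleq P (- s) x" "pleq P x s" using loc unfolding localizable_def by blast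
  have xs: "x + s \<in> P" "s \<in> P" using s Loc_P[OF P] unfolding pleq_def by auto
  have "of_nat k * x + of_nat (n - 1) * s \<in> P" if "k \<ge> 1" for k
  proof -
    have km: "k mod n \<le> n - 1" using n by (simp add: less_Suc_eq_le[symmetric])
    have "of_nat k * x + of_nat (n - 1) * s
       = of_nat (k div n) * (of_nat n * x) + of_nat (k mod n) * (x + s) + of_nat (n - 1 - k mod n) * s"
    proof -
      have k: "of_nat k = (of_nat (k div n) * of_nat n + of_nat (k mod n) :: 'a)"
        by (metis div_mult_mod_eq of_nat_add of_nat_mult)
      have "of_nat (n - 1) = (of_nat (n - 1 - k mod n) + of_nat (k mod n) :: 'a)"
        using km by (metis le_add_diff_inverse2 of_nat_add)
      then show ?thesis unfolding k by (simp add: algebra_simps)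
    qed
    also have "\<dots> \<in> P" by (rule po_add[OF P po_add[OF P po_nat_mult[OF P x] po_nat_mult[OF P xs(1)]] po_nat_mult[OF P xs(2)]])
    finally show ?thesis .
  qed
  then show ?thesis using ar unfolding archimedean_po_def by blast
qed

lemma Rbd_iff:
  "a \<in> Rbd P \<longleftrightarrow> snd a \<in> Loc P \<and> (\<exists>n::nat. fst a + of_nat n * snd a \<in> P \<and> of_nat n * snd a - fst a \<in> P)"
  unfolding Rbd_def Rloc_def frac_le_def pleq_def by (simp add: algebra_simps)

definition cls :: "'a::comm_ring_1 \<times> 'a \<Rightarrow> 'a qfrac" where
  "cls a = QF (fst a) (snd a)"

locale setting =
  fixes P :: "'a::comm_ring_1 set"
  assumes P: "po_cring P" and loc: "localizable P" and ar: "archimedean_po P"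
begin

lemma div2: "2 * x \<in> P \<Longrightarrow> x \<in> P"
  using div_R[OF P loc ar, of 2 x] by simp

lemma Rbd_add: assumes a: "a \<in> Rbd P" and b: "b \<in> Rbd P" shows "frac_add a b \<in> Rbd P"
proof -
  obtain r s where ab1: "a = (r, s)" by (cases a)
  obtain u v where ab2: "b = (u, v)" by (cases b)
  obtain n :: nat where n: "s \<in> Loc P" "r + of_nat n * s \<in> P" "of_nat n * s - r \<in> P"
    using a unfolding ab1 Rbd_iff by auto
  obtain m :: nat where m: "v \<in> Loc P" "u + of_nat m * v \<in> P" "of_nat m * v - u \<in> P"
    using b unfolding ab2 Rbd_iff by auto
  have sv: "s \<in> P" "v \<in> P" using n m Loc_P[OF P] by auto
  have "(r * v + u * s) + of_nat (n + m) * (s * v) = v * (r + of_nat n * s) + s * (u + of_nat m * v)"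
    by (simp add: algebra_simps)
  also have "\<dots> \<in> P" by (rule po_add[OF P po_mult[OF P sv(2) n(2)] po_mult[OF P sv(1) m(2)]])
  finally have 1: "(r * v + u * s) + of_nat (n + m) * (s * v) \<in> P" .
  have "of_nat (n + m) * (s * v) - (r * v + u * s) = v * (of_nat n * s - r) + s * (of_nat m * v - u)"
    by (simp add: algebra_simps)
  also have "\<dots> \<in> P" by (rule po_add[OF P po_mult[OF P sv(2) n(3)] po_mult[OF P sv(1) m(3)]])
  finally have 2: "of_nat (n + m) * (s * v) - (r * v + u * s) \<in> P" .
  show ?thesis unfolding ab1 ab2 frac_add_def Rbd_iff using 1 2 Loc_mult[OF P n(1) m(1)]
    by (auto intro!: exI[of _ "n + m"])
qed

lemma Rbd_mult: assumes a: "a \<in> Rbd P" and b: "b \<in> Rbd P" shows "frac_mult a b \<in> Rbd P"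
proof -
  obtain r s where ab1: "a = (r, s)" by (cases a)
  obtain u v where ab2: "b = (u, v)" by (cases b)
  obtain n :: nat where n: "s \<in> Loc P" "r + of_nat n * s \<in> P" "of_nat n * s - r \<in> P"
    using a unfolding ab1 Rbd_iff by auto
  obtain m :: nat where m: "v \<in> Loc P" "u + of_nat m * v \<in> P" "of_nat m * v - u \<in> P"
    using b unfolding ab2 Rbd_iff by auto
  have "2 * ((r * u) + of_nat (n * m) * (s * v)) = (of_nat n * s - r) * (of_nat m * v - u) + (r + of_nat n * s) * (u + of_nat m * v)"
    by (simp add: algebra_simps)
  also have "\<dots> \<in> P" by (rule po_add[OF P po_mult[OF P n(3) m(3)] po_mult[OF P n(2) m(2)]])
  finally have 1: "(r * u) + of_nat (n * m) * (s * v) \<in> P" by (rule div2)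
  have "2 * (of_nat (n * m) * (s * v) - r * u) = (of_nat n * s - r) * (u + of_nat m * v) + (r + of_nat n * s) * (of_nat m * v - u)"
    by (simp add: algebra_simps)
  also have "\<dots> \<in> P" by (rule po_add[OF P po_mult[OF P n(3) m(2)] po_mult[OF P n(2) m(3)]])
  finally have 2: "of_nat (n * m) * (s * v) - r * u \<in> P" by (rule div2)
  show ?thesis unfolding ab1 ab2 frac_mult_def Rbd_iff using 1 2 Loc_mult[OF P n(1) m(1)]
    by (auto intro!: exI[of _ "n * m"])
qed

lemma Rbd_neg: "a \<in> Rbd P \<Longrightarrow> (- fst a, snd a) \<in> Rbd P"
proof -
  assume "a \<in> Rbd P"
  then obtain n :: nat where n: "snd a \<in> Loc P" "fst a + of_nat n * snd a \<in> P" "of_nat n * snd a - fst a \<in> P"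
    unfolding Rbd_iff by blast
  have "- fst a + of_nat n * snd a = of_nat n * snd a - fst a" "of_nat n * snd a - - fst a = fst a + of_nat n * snd a"
    by simp_all
  then show ?thesis unfolding Rbd_iff fst_conv snd_conv using n by metis
qed

lemma Rbd_nat: "(of_nat k, 1) \<in> Rbd P"
proof -
  have "of_nat k + of_nat k * 1 = (of_nat (k + k) :: 'a)" "of_nat k * 1 - of_nat k = (0::'a)" by simp_all
  then have h: "of_nat k + of_nat k * 1 \<in> P \<and> of_nat k * 1 - of_nat k \<in> P"
    using po_of_nat[OF P] po_zero[OF P] by metis
  show ?thesis unfolding Rbd_iff fst_conv snd_conv using Loc_one[OF P] h by blast
qed

lemma Rbd_one: "(1, 1) \<in> Rbd P"
  using Rbd_nat[of 1] by simp

lemma Rbd_q: "q \<in> Loc P \<Longrightarrow> (1, q) \<in> Rbd P"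
proof -
  assume q: "q \<in> Loc P"
  have "1 + of_nat 1 * q \<in> P" using po_add[OF P po_one[OF P] Loc_P[OF P q]] by simp
  moreover have "of_nat 1 * q - 1 \<in> P" using q unfolding Loc_def by simp
  ultimately show ?thesis unfolding Rbd_iff fst_conv snd_conv using q by blast
qed

lemma Rbd_Loc: "a \<in> Rbd P \<Longrightarrow> snd a \<in> Loc P"
  unfolding Rbd_iff by blast

lemma Rbd_nzd: "a \<in> Rbd P \<Longrightarrow> nzd (snd a)"
  using Rbd_Loc Loc_nzd[OF P] by blast

lemma cls_add: "a \<in> Rbd P \<Longrightarrow> b \<in> Rbd P \<Longrightarrow> cls (frac_add a b) = cls a + cls b"
  unfolding cls_def frac_add_def using Rbd_nzd by simp

lemma cls_mult: "a \<in> Rbd P \<Longrightarrow> b \<in> Rbd P \<Longrightarrow> cls (frac_mult a b) = cls a * cls b"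
  unfolding cls_def frac_mult_def using Rbd_nzd by simp

lemma cls_neg: "a \<in> Rbd P \<Longrightarrow> cls (- fst a, snd a) = - cls a"
  unfolding cls_def using Rbd_nzd by simp

lemma cls_nat: "cls (of_nat k, 1) = of_nat k"
  unfolding cls_def by (simp add: of_nat_QF)

lemma cls_one: "cls (1, 1) = 1"
  using cls_nat[of 1] by simp

lemma cls_eq: "a \<in> Rbd P \<Longrightarrow> b \<in> Rbd P \<Longrightarrow> cls a = cls b \<longleftrightarrow> frac_eq a b"
  unfolding cls_def frac_eq_def using Rbd_nzd eq_QF by blast

definition Aset :: "'a qfrac set" where "Aset = cls ` Rbd P"
definition Cset :: "'a qfrac set" where "Cset = cls ` {a \<in> Rbd P. fst a \<in> P}"

lemma C_iff: assumes b: "b \<in> Rbd P" shows "cls b \<in> Cset \<longleftrightarrow> fst b \<in> P"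
proof
  assume "cls b \<in> Cset"
  then obtain a where a: "a \<in> Rbd P" "fst a \<in> P" "cls b = cls a" unfolding Cset_def by blast
  then have "frac_eq a b" using cls_eq[OF a(1) b] by simp
  then have e: "fst a * snd b = fst b * snd a" unfolding frac_eq_def .
  have "fst a * snd b \<in> P" by (rule po_mult[OF P a(2) Loc_P[OF P Rbd_Loc[OF b]]])
  then have "fst b * snd a \<in> P" by (simp only: e)
  then show "fst b \<in> P" by (rule Loc_cancel[OF Rbd_Loc[OF a(1)]])
next
  assume "fst b \<in> P" then show "cls b \<in> Cset" unfolding Cset_def using b by blast
qed

lemma kd: "kdring Aset Cset"
proof
  fix x y assume "x \<in> Aset" "y \<in> Aset"
  then obtain a b where ab: "a \<in> Rbd P" "b \<in> Rbd P" "x = cls a" "y = cls b" unfolding Aset_def by blast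
  show "x + y \<in> Aset" unfolding Aset_def using ab cls_add Rbd_add by (intro image_eqI[where x="frac_add a b"]) auto
  show "x * y \<in> Aset" unfolding Aset_def using ab cls_mult Rbd_mult by (intro image_eqI[where x="frac_mult a b"]) auto
next
  fix x assume "x \<in> Aset"
  then obtain a where a: "a \<in> Rbd P" "x = cls a" unfolding Aset_def by blast
  show "- x \<in> Aset" unfolding Aset_def using a cls_neg Rbd_neg by (intro image_eqI[where x="(- fst a, snd a)"]) auto
  show "x * x \<in> Cset"
  proof -
    have "x * x = cls (frac_mult a a)" using a cls_mult by simp
    moreover have "fst (frac_mult a a) \<in> P" unfolding frac_mult_def using po_sq[OF P] by simp
    ultimately show ?thesis using C_iff Rbd_mult a(1) by simp
  qed
  obtain n :: nat where n: "of_nat n * snd a - fst a \<in> P" using a(1) unfolding Rbd_iff by blast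
  have "cls (frac_add (of_nat n, 1) (- fst a, snd a)) = cls (of_nat n, 1) + cls (- fst a, snd a)"
    by (rule cls_add[OF Rbd_nat Rbd_neg[OF a(1)]])
  also have "\<dots> = of_nat n - x" using cls_nat cls_neg[OF a(1)] a(2) by simp
  finally have "of_nat n - x = cls (frac_add (of_nat n, 1) (- fst a, snd a))" by simp
  moreover have "fst (frac_add (of_nat n, 1) (- fst a, snd a)) \<in> P" unfolding frac_add_def using n by simp
  ultimately have "of_nat n - x \<in> Cset" using C_iff[OF Rbd_add[OF Rbd_nat Rbd_neg[OF a(1)]]] by simp
  then show "\<exists>n::nat. of_nat n - x \<in> Cset" by blast
  fix k :: nat assume k: "k > 0" "of_nat k * x \<in> Cset"
  have "of_nat k * x = cls (of_nat k, 1) * cls a" by (simp only: cls_nat a(2))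
  then have "of_nat k * x = cls (frac_mult (of_nat k, 1) a)" using cls_mult[OF Rbd_nat a(1)] by simp
  then have "fst (frac_mult (of_nat k, 1) a) \<in> P" using C_iff Rbd_mult[OF Rbd_nat a(1)] k by simp
  then have "of_nat k * fst a \<in> P" unfolding frac_mult_def by simp
  then have "fst a \<in> P" using div_R[OF P loc ar k(1)] by blast
  then show "x \<in> Cset" using C_iff a by simp
next
  show "1 \<in> Aset" unfolding Aset_def using Rbd_one cls_one by (intro image_eqI[where x="(1,1)"]) auto
  show "Cset \<subseteq> Aset" unfolding Aset_def Cset_def by blast
next
  fix x y assume "x \<in> Cset" "y \<in> Cset"
  then obtain a b where ab: "a \<in> Rbd P" "b \<in> Rbd P" "x = cls a" "y = cls b" "fst a \<in> P" "fst b \<in> P"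
    unfolding Cset_def by blast
  have sv: "snd a \<in> P" "snd b \<in> P" using ab Rbd_Loc Loc_P[OF P] by auto
  have "fst (frac_add a b) \<in> P" unfolding frac_add_def using ab sv P by (simp add: po_add po_mult)
  then have "cls (frac_add a b) \<in> Cset" using C_iff[OF Rbd_add[OF ab(1,2)]] by simp
  then show "x + y \<in> Cset" using cls_add[OF ab(1,2)] ab(3,4) by simp
  have "fst (frac_mult a b) \<in> P" unfolding frac_mult_def using ab sv P by (simp add: po_add po_mult)
  then have "cls (frac_mult a b) \<in> Cset" using C_iff[OF Rbd_mult[OF ab(1,2)]] by simp
  then show "x * y \<in> Cset" using cls_mult[OF ab(1,2)] ab(3,4) by simp
next
  fix x h assume x: "x \<in> Aset" and h: "h \<in> Aset" and H: "\<forall>k::nat. k \<ge> 1 \<longrightarrow> of_nat k * x + h \<in> Cset"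
  obtain a b where ab: "a \<in> Rbd P" "b \<in> Rbd P" "x = cls a" "h = cls b" using x h unfolding Aset_def by blast
  have "of_nat k * (fst a * snd b) + fst b * snd a \<in> P" if k: "k \<ge> 1" for k :: nat
  proof -
    let ?e = "frac_add (frac_mult (of_nat k, 1) a) b"
    have e: "?e \<in> Rbd P" using ab by (intro Rbd_add Rbd_mult Rbd_nat)
    have "cls ?e = cls (frac_mult (of_nat k, 1) a) + cls b" by (rule cls_add[OF Rbd_mult[OF Rbd_nat ab(1)] ab(2)])
    also have "\<dots> = cls (of_nat k, 1) * cls a + cls b" by (simp only: cls_mult[OF Rbd_nat ab(1)])
    also have "\<dots> = of_nat k * x + h" by (simp only: cls_nat ab(3,4))
    finally have "cls ?e = of_nat k * x + h" .
    then have "fst ?e \<in> P" using H k C_iff[OF e] by simp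
    then show ?thesis unfolding frac_add_def frac_mult_def by (simp add: algebra_simps)
  qed
  then have "fst a * snd b \<in> P" using ar unfolding archimedean_po_def by blast
  then have "fst a \<in> P" using Loc_cancel Rbd_Loc[OF ab(2)] by blast
  then show "x \<in> Cset" using ab C_iff by simp
qed

end

context kdring
begin

lemma chars_add: "\<psi> \<in> chars \<Longrightarrow> x \<in> A \<Longrightarrow> y \<in> A \<Longrightarrow> \<psi> (x + y) = \<psi> x + \<psi> y"
  unfolding chars_def by blast
lemma chars_mult: "\<psi> \<in> chars \<Longrightarrow> x \<in> A \<Longrightarrow> y \<in> A \<Longrightarrow> \<psi> (x * y) = \<psi> x * \<psi> y"
  unfolding chars_def by blast
lemma chars_pos: "\<psi> \<in> chars \<Longrightarrow> x \<in> C \<Longrightarrow> 0 \<le> \<psi> x"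
  unfolding chars_def by blast
lemma chars_one: "\<psi> \<in> chars \<Longrightarrow> \<psi> 1 = 1"
  unfolding chars_def by blast

lemma chars_neg: "\<psi> \<in> chars \<Longrightarrow> x \<in> A \<Longrightarrow> \<psi> (- x) = - \<psi> x"
proof -
  assume h: "\<psi> \<in> chars" "x \<in> A"
  have "\<psi> (x + - x) = \<psi> x + \<psi> (- x)" using chars_add[OF h(1) h(2) A_uminus[OF h(2)]] .
  moreover have "\<psi> (x + - x) = 0" using chars_zero[OF h(1)] by simp
  ultimately show ?thesis by linarith
qed

lemma chars_diff: "\<psi> \<in> chars \<Longrightarrow> x \<in> A \<Longrightarrow> y \<in> A \<Longrightarrow> \<psi> (x - y) = \<psi> x - \<psi> y"
  using chars_add[of \<psi> x "- y"] chars_neg[of \<psi> y] A_uminus[of y] by simp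

lemma chars_of_int: "\<psi> \<in> chars \<Longrightarrow> \<psi> (of_int k) = real_of_int k"
proof (cases "k \<ge> 0")
  case True
  assume h: "\<psi> \<in> chars"
  have "of_int k = (of_nat (nat k) :: 'b)" using True by simp
  then show ?thesis using chars_of_nat[OF h, of "nat k"] True by simp
next
  case False
  assume h: "\<psi> \<in> chars"
  have "of_int k = - (of_nat (nat (- k)) :: 'b)" using False by simp
  then show ?thesis using chars_of_nat[OF h, of "nat (- k)"] chars_neg[OF h A_of_nat, of "nat (- k)"] False by simp
qed

lemma A_sum: "finite F \<Longrightarrow> (\<And>p. p \<in> F \<Longrightarrow> f p \<in> A) \<Longrightarrow> sum f F \<in> A"
  by (induct F rule: finite_induct) (auto intro: A_add A_zero)

lemma chars_sum: "finite F \<Longrightarrow> \<psi> \<in> chars \<Longrightarrow> (\<And>p. p \<in> F \<Longrightarrow> f p \<in> A) \<Longrightarrow> \<psi> (sum f F) = (\<Sum>p\<in>F. \<psi> (f p))"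
proof (induct F rule: finite_induct)
  case empty then show ?case using chars_zero by simp
next
  case (insert p F)
  have "\<psi> (f p + sum f F) = \<psi> (f p) + \<psi> (sum f F)"
    using insert by (intro chars_add A_sum) auto
  then show ?case using insert by simp
qed

end

context setting
begin

sublocale K: kdring Aset Cset by (rule kd)

definition toK :: "('a qfrac \<Rightarrow> real) \<Rightarrow> ('a \<times> 'a \<Rightarrow> real)" where
  "toK ch = (\<lambda>a. if a \<in> Rbd P then ch (cls a) else 0)"

definition toQ :: "('a \<times> 'a \<Rightarrow> real) \<Rightarrow> 'a qfrac \<Rightarrow> real" where
  "toQ \<phi> = (\<lambda>x. \<phi> (SOME a. a \<in> Rbd P \<and> cls a = x))"

lemma cls_A: "a \<in> Rbd P \<Longrightarrow> cls a \<in> Aset"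
  unfolding Aset_def by blast

lemma frac_le_pos: "frac_le P (0, 1) a \<longleftrightarrow> fst a \<in> P"
  unfolding frac_le_def pleq_def by simp

lemma toK_cls: "a \<in> Rbd P \<Longrightarrow> toK ch a = ch (cls a)"
  unfolding toK_def by simp

lemma toK_K: assumes ch: "ch \<in> K.chars" shows "toK ch \<in> Kspace P"
  unfolding Kspace_def mem_Collect_eq
proof (intro conjI ballI allI impI)
  fix a assume "a \<notin> Rbd P" then show "toK ch a = 0" unfolding toK_def by simp
next
  fix a b assume ab: "a \<in> Rbd P" "b \<in> Rbd P" "frac_eq a b"
  then have "cls a = cls b" using cls_eq by blast
  then show "toK ch a = toK ch b" unfolding toK_def using ab by simp
next
  have "toK ch (1, 1) = ch (cls (1, 1))" by (rule toK_cls[OF Rbd_one])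
  also have "\<dots> = ch 1" by (simp only: cls_one)
  finally show "toK ch (1, 1) = 1" using K.chars_one[OF ch] by simp
next
  fix a b assume ab: "a \<in> Rbd P" "b \<in> Rbd P"
  show "toK ch (frac_add a b) = toK ch a + toK ch b"
    unfolding toK_def using ab Rbd_add[OF ab] cls_add[OF ab] K.chars_add[OF ch cls_A[OF ab(1)] cls_A[OF ab(2)]] by simp
  show "toK ch (frac_mult a b) = toK ch a * toK ch b"
    unfolding toK_def using ab Rbd_mult[OF ab] cls_mult[OF ab] K.chars_mult[OF ch cls_A[OF ab(1)] cls_A[OF ab(2)]] by simp
next
  fix a assume a: "a \<in> Rbd P" "frac_le P (0, 1) a"
  then have "cls a \<in> Cset" using C_iff frac_le_pos by blast
  then show "0 \<le> toK ch a" unfolding toK_def using a K.chars_pos[OF ch] by simp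
qed

lemma K_eq: "\<phi> \<in> Kspace P \<Longrightarrow> a \<in> Rbd P \<Longrightarrow> b \<in> Rbd P \<Longrightarrow> frac_eq a b \<Longrightarrow> \<phi> a = \<phi> b"
  unfolding Kspace_def by blast

lemma toQ_cls: assumes \<phi>: "\<phi> \<in> Kspace P" and a: "a \<in> Rbd P" shows "toQ \<phi> (cls a) = \<phi> a"
proof -
  have "\<exists>b. b \<in> Rbd P \<and> cls b = cls a" using a by blast
  then have b: "(SOME b. b \<in> Rbd P \<and> cls b = cls a) \<in> Rbd P \<and> cls (SOME b. b \<in> Rbd P \<and> cls b = cls a) = cls a"
    by (rule someI_ex)
  then have "frac_eq (SOME b. b \<in> Rbd P \<and> cls b = cls a) a" using cls_eq a by blast
  then show ?thesis unfolding toQ_def using K_eq[OF \<phi>] b a by blast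
qed

lemma toQ_chars: assumes \<phi>: "\<phi> \<in> Kspace P" shows "toQ \<phi> \<in> K.chars"
  unfolding K.chars_def mem_Collect_eq
proof (intro conjI ballI)
  have "toQ \<phi> 1 = toQ \<phi> (cls (1, 1))" by (simp only: cls_one)
  also have "\<dots> = \<phi> (1, 1)" by (rule toQ_cls[OF \<phi> Rbd_one])
  finally show "toQ \<phi> 1 = 1" using \<phi> unfolding Kspace_def by simp
next
  fix x y assume "x \<in> Aset" "y \<in> Aset"
  then obtain a b where ab: "a \<in> Rbd P" "b \<in> Rbd P" "x = cls a" "y = cls b" unfolding Aset_def by blast
  have "toQ \<phi> (x + y) = \<phi> (frac_add a b)" using toQ_cls[OF \<phi> Rbd_add[OF ab(1,2)]] cls_add[OF ab(1,2)] ab by simp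
  also have "\<dots> = \<phi> a + \<phi> b" using \<phi> ab unfolding Kspace_def by blast
  finally show "toQ \<phi> (x + y) = toQ \<phi> x + toQ \<phi> y" using toQ_cls[OF \<phi>] ab by simp
  have "toQ \<phi> (x * y) = \<phi> (frac_mult a b)" using toQ_cls[OF \<phi> Rbd_mult[OF ab(1,2)]] cls_mult[OF ab(1,2)] ab by simp
  also have "\<dots> = \<phi> a * \<phi> b" using \<phi> ab unfolding Kspace_def by blast
  finally show "toQ \<phi> (x * y) = toQ \<phi> x * toQ \<phi> y" using toQ_cls[OF \<phi>] ab by simp
next
  fix x assume "x \<in> Cset"
  then obtain a where a: "a \<in> Rbd P" "fst a \<in> P" "x = cls a" unfolding Cset_def by blast
  then have "frac_le P (0, 1) a" using frac_le_pos by blast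
  then have "0 \<le> \<phi> a" using \<phi> a unfolding Kspace_def by blast
  then show "0 \<le> toQ \<phi> x" using toQ_cls[OF \<phi> a(1)] a by simp
qed

lemma cdiv: assumes q: "q \<in> Loc P" and x: "x \<in> Aset" and cx: "cls (1, q) * x \<in> Cset" shows "x \<in> Cset"
proof -
  obtain a where a: "a \<in> Rbd P" "x = cls a" using x unfolding Aset_def by blast
  have "cls (frac_mult (1, q) a) \<in> Cset" using cx cls_mult[OF Rbd_q[OF q] a(1)] a by simp
  then have "fst (frac_mult (1, q) a) \<in> P" using C_iff Rbd_mult[OF Rbd_q[OF q] a(1)] by blast
  then have "fst a \<in> P" unfolding frac_mult_def by simp
  then show ?thesis using C_iff a by simp
qed

end

context setting
begin

lemma nbhd:
  assumes "generate_topology_on {{\<phi> \<in> Kspace P. \<phi> a \<in> V} | a V. a \<in> Rbd P \<and> open V} W"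
  shows "\<forall>\<phi>\<in>W. \<exists>F. finite F \<and> (\<forall>p\<in>F. fst p \<in> Rbd P \<and> open (snd p) \<and> \<phi> (fst p) \<in> snd p) \<and>
           {\<psi> \<in> Kspace P. \<forall>p\<in>F. \<psi> (fst p) \<in> snd p} \<subseteq> W"
  using assms
proof (induct rule: generate_topology_on.induct)
  case Empty then show ?case by (intro ballI) (simp only: empty_iff)
next
  case (Int a b)
  show ?case
  proof
    fix \<phi> assume "\<phi> \<in> a \<inter> b"
    then have "\<phi> \<in> a" "\<phi> \<in> b" by auto
    from bspec[OF Int(2) \<open>\<phi> \<in> a\<close>] obtain F1 where F1': "finite F1 \<and> (\<forall>p\<in>F1. fst p \<in> Rbd P \<and> open (snd p) \<and> \<phi> (fst p) \<in> snd p) \<and>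
      {\<psi> \<in> Kspace P. \<forall>p\<in>F1. \<psi> (fst p) \<in> snd p} \<subseteq> a" ..
    from bspec[OF Int(4) \<open>\<phi> \<in> b\<close>] obtain F2 where F2': "finite F2 \<and> (\<forall>p\<in>F2. fst p \<in> Rbd P \<and> open (snd p) \<and> \<phi> (fst p) \<in> snd p) \<and>
      {\<psi> \<in> Kspace P. \<forall>p\<in>F2. \<psi> (fst p) \<in> snd p} \<subseteq> b" ..
    note F1 = conjunct1[OF F1'] conjunct1[OF conjunct2[OF F1']] conjunct2[OF conjunct2[OF F1']]
    note F2 = conjunct1[OF F2'] conjunct1[OF conjunct2[OF F2']] conjunct2[OF conjunct2[OF F2']]
    have "{\<psi> \<in> Kspace P. \<forall>p\<in>F1 \<union> F2. \<psi> (fst p) \<in> snd p} \<subseteq> a \<inter> b" using F1(3) F2(3) by blast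
    moreover have "finite (F1 \<union> F2)" using F1(1) F2(1) by simp
    moreover have "\<forall>p\<in>F1 \<union> F2. fst p \<in> Rbd P \<and> open (snd p) \<and> \<phi> (fst p) \<in> snd p" using F1(2) F2(2) by blast
    ultimately show "\<exists>F. finite F \<and> (\<forall>p\<in>F. fst p \<in> Rbd P \<and> open (snd p) \<and> \<phi> (fst p) \<in> snd p) \<and>
           {\<psi> \<in> Kspace P. \<forall>p\<in>F. \<psi> (fst p) \<in> snd p} \<subseteq> a \<inter> b" by blast
  qed
next
  case (UN K)
  show ?case
  proof
    fix \<phi> assume "\<phi> \<in> \<Union>K"
    then obtain k where k: "k \<in> K" "\<phi> \<in> k" by blast
    from bspec[OF UN(2)[OF k(1)] k(2)] obtain F where F': "finite F \<and> (\<forall>p\<in>F. fst p \<in> Rbd P \<and> open (snd p) \<and> \<phi> (fst p) \<in> snd p) \<and>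
      {\<psi> \<in> Kspace P. \<forall>p\<in>F. \<psi> (fst p) \<in> snd p} \<subseteq> k" ..
    note F = conjunct1[OF F'] conjunct1[OF conjunct2[OF F']] conjunct2[OF conjunct2[OF F']]
    have "{\<psi> \<in> Kspace P. \<forall>p\<in>F. \<psi> (fst p) \<in> snd p} \<subseteq> \<Union>K" using F(3) k(1) by blast
    then show "\<exists>F. finite F \<and> (\<forall>p\<in>F. fst p \<in> Rbd P \<and> open (snd p) \<and> \<phi> (fst p) \<in> snd p) \<and>
           {\<psi> \<in> Kspace P. \<forall>p\<in>F. \<psi> (fst p) \<in> snd p} \<subseteq> \<Union>K" using F(1,2) by blast
  qed
next
  case (Basis s)
  then obtain a V where s: "s = {\<phi> \<in> Kspace P. \<phi> a \<in> V}" "a \<in> Rbd P" "open V" by blast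
  show ?case
  proof
    fix \<phi> assume "\<phi> \<in> s"
    then have "\<phi> a \<in> V" using s by blast
    then have "\<forall>p\<in>{(a, V)}. fst p \<in> Rbd P \<and> open (snd p) \<and> \<phi> (fst p) \<in> snd p" using s by simp
    moreover have "{\<psi> \<in> Kspace P. \<forall>p\<in>{(a, V)}. \<psi> (fst p) \<in> snd p} \<subseteq> s" using s by simp
    moreover have "finite {(a, V)}" by simp
    ultimately show "\<exists>F. finite F \<and> (\<forall>p\<in>F. fst p \<in> Rbd P \<and> open (snd p) \<and> \<phi> (fst p) \<in> snd p) \<and>
           {\<psi> \<in> Kspace P. \<forall>p\<in>F. \<psi> (fst p) \<in> snd p} \<subseteq> s" by blast
  qed
qed

lemma eps:
  fixes \<phi> :: "'x \<Rightarrow> real" and F :: "('x \<times> real set) set"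
  shows "finite F \<Longrightarrow> \<forall>p\<in>F. open (snd p) \<and> \<phi> (fst p) \<in> snd p \<Longrightarrow>
     \<exists>e>0. \<forall>p\<in>F. \<forall>y. \<bar>y - \<phi> (fst p)\<bar> < e \<longrightarrow> y \<in> snd p"
proof (induct F rule: finite_induct)
  case empty
  have "(1::real) > 0" by simp
  then show ?case by blast
next
  case (insert p F)
  obtain e1 where e1: "e1 > 0" "\<forall>p\<in>F. \<forall>y. \<bar>y - \<phi> (fst p)\<bar> < e1 \<longrightarrow> y \<in> snd p" using insert by auto
  have "open (snd p)" "\<phi> (fst p) \<in> snd p" using insert by auto
  then obtain e2 where e2: "e2 > 0" "\<forall>y. dist y (\<phi> (fst p)) < e2 \<longrightarrow> y \<in> snd p"
    unfolding open_dist by blast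
  show ?case
  proof (intro exI[of _ "min e1 e2"] conjI ballI allI impI)
    show "0 < min e1 e2" using e1 e2 by simp
  next
    fix p' y assume "p' \<in> insert p F" "\<bar>y - \<phi> (fst p')\<bar> < min e1 e2"
    then show "y \<in> snd p'" using e1 e2 by (auto simp: dist_real_def)
  qed
qed

lemma far_term:
  fixes x y e :: real and n :: nat and K :: nat
  assumes "\<bar>x - y\<bar> \<ge> e" "real n * e \<ge> real K + 2"
  shows "real K + 1 \<le> (real n * x - real_of_int \<lfloor>real n * y\<rfloor>)\<^sup>2"
proof -
  let ?t = "real n * x - real_of_int \<lfloor>real n * y\<rfloor>"
  have "\<bar>real n * (x - y)\<bar> = real n * \<bar>x - y\<bar>" by (simp add: abs_mult)
  also have "\<dots> \<ge> real n * e" using assms(1) by (simp add: mult_left_mono)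
  finally have a: "\<bar>real n * (x - y)\<bar> \<ge> real n * e" .
  have b: "\<bar>real_of_int \<lfloor>real n * y\<rfloor> - real n * y\<bar> \<le> 1"
    by (simp add: abs_le_iff) linarith
  have "?t = real n * (x - y) - (real_of_int \<lfloor>real n * y\<rfloor> - real n * y)" by (simp add: algebra_simps)
  then have "\<bar>?t\<bar> \<ge> \<bar>real n * (x - y)\<bar> - \<bar>real_of_int \<lfloor>real n * y\<rfloor> - real n * y\<bar>"
    using abs_triangle_ineq2 by metis
  then have t: "\<bar>?t\<bar> \<ge> real K + 1" using a b assms(2) by linarith
  have "(real K + 1) * 1 \<le> (real K + 1) * (real K + 1)" by simp
  also have "\<dots> \<le> \<bar>?t\<bar> * \<bar>?t\<bar>" using t by (intro mult_mono) auto
  also have "\<dots> = ?t\<^sup>2" by (simp add: power2_eq_square)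
  finally show ?thesis by simp
qed

lemma near_term:
  fixes y :: real and n :: nat
  shows "(real n * y - real_of_int \<lfloor>real n * y\<rfloor>)\<^sup>2 \<le> 1"
proof -
  have "0 \<le> real n * y - real_of_int \<lfloor>real n * y\<rfloor>" "real n * y - real_of_int \<lfloor>real n * y\<rfloor> \<le> 1"
    by linarith+
  then show ?thesis by (simp add: power_le_one)
qed

lemma dense:
  assumes q: "q \<in> Loc P" and \<phi>: "\<phi> \<in> Kspace P"
    and W: "generate_topology_on {{\<phi> \<in> Kspace P. \<phi> a \<in> V} | a V. a \<in> Rbd P \<and> open V} W" and \<phi>W: "\<phi> \<in> W"
  shows "\<exists>\<psi>. \<psi> \<in> O_fin P q \<and> \<psi> \<in> W"
proof (rule ccontr)
  assume H: "\<not> (\<exists>\<psi>. \<psi> \<in> O_fin P q \<and> \<psi> \<in> W)"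
  from bspec[OF nbhd[OF W] \<phi>W] obtain F where F': "finite F \<and> (\<forall>p\<in>F. fst p \<in> Rbd P \<and> open (snd p) \<and> \<phi> (fst p) \<in> snd p) \<and>
      {\<psi> \<in> Kspace P. \<forall>p\<in>F. \<psi> (fst p) \<in> snd p} \<subseteq> W" ..
  note F = conjunct1[OF F'] conjunct1[OF conjunct2[OF F']] conjunct2[OF conjunct2[OF F']]
  have "\<forall>p\<in>F. open (snd p) \<and> \<phi> (fst p) \<in> snd p" using F(2) by blast
  from eps[OF F(1) this] obtain e where e: "e > 0" "\<forall>p\<in>F. \<forall>y. \<bar>y - \<phi> (fst p)\<bar> < e \<longrightarrow> y \<in> snd p"
    by blast
  define K where "K = card F"
  define n where "n = nat \<lceil>(real K + 2) / e\<rceil> + 1"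
  have "real n \<ge> (real K + 2) / e" unfolding n_def by linarith
  then have ne: "real n * e \<ge> real K + 2" using e(1) by (simp add: divide_le_eq)
  define mm where "mm = (\<lambda>y::real. \<lfloor>real n * y\<rfloor>)"
  define tm where "tm = (\<lambda>p::('a \<times> 'a) \<times> real set. (of_nat n * cls (fst p) - of_int (mm (\<phi> (fst p))))
                          * (of_nat n * cls (fst p) - of_int (mm (\<phi> (fst p)))) :: 'a qfrac)"
  define fx where "fx = of_nat (K + 1) - sum tm F"
  have tmA: "tm p \<in> Aset" if "p \<in> F" for p
  proof -
    have "cls (fst p) \<in> Aset" using F(2) that cls_A by blast
    then show ?thesis unfolding tm_def by (intro K.A_mult K.A_diff K.A_of_nat K.A_of_int)
  qed
  have fxA: "fx \<in> Aset" unfolding fx_def using tmA F(1) by (intro K.A_diff K.A_of_nat K.A_sum) auto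
  have eval: "ch fx = real (K + 1) - (\<Sum>p\<in>F. (real n * ch (cls (fst p)) - real_of_int (mm (\<phi> (fst p))))\<^sup>2)"
    if ch: "ch \<in> K.chars" for ch
  proof -
    have "ch (tm p) = (real n * ch (cls (fst p)) - real_of_int (mm (\<phi> (fst p))))\<^sup>2" if p: "p \<in> F" for p
    proof -
      have c: "cls (fst p) \<in> Aset" using F(2) p cls_A by blast
      have d: "of_nat n * cls (fst p) - of_int (mm (\<phi> (fst p))) \<in> Aset"
        using c by (intro K.A_diff K.A_mult K.A_of_nat K.A_of_int)
      have "ch (of_nat n * cls (fst p) - of_int (mm (\<phi> (fst p)))) = real n * ch (cls (fst p)) - real_of_int (mm (\<phi> (fst p)))"
        using K.chars_diff[OF ch K.A_mult[OF K.A_of_nat c] K.A_of_int] K.chars_mult[OF ch K.A_of_nat c]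
          K.chars_of_nat[OF ch] K.chars_of_int[OF ch] by simp
      then show ?thesis unfolding tm_def using K.chars_mult[OF ch d d] by (simp add: power2_eq_square)
    qed
    then have "(\<Sum>p\<in>F. ch (tm p)) = (\<Sum>p\<in>F. (real n * ch (cls (fst p)) - real_of_int (mm (\<phi> (fst p))))\<^sup>2)"
      by (rule sum.cong[OF refl])
    moreover have "ch (sum tm F) = (\<Sum>p\<in>F. ch (tm p))" using K.chars_sum[OF F(1) ch] tmA by blast
    ultimately have e3: "ch (sum tm F) = (\<Sum>p\<in>F. (real n * ch (cls (fst p)) - real_of_int (mm (\<phi> (fst p))))\<^sup>2)"
      by simp
    have e1: "ch fx = ch (of_nat (K + 1)) - ch (sum tm F)"
      unfolding fx_def using K.chars_diff[OF ch K.A_of_nat K.A_sum[OF F(1)]] tmA by blast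
    have e2: "ch (of_nat (K + 1)) = real (K + 1)" by (rule K.chars_of_nat[OF ch])
    show ?thesis by (simp only: e1 e2 e3)
  qed
  define c where "c = cls (1, q)"
  have cA: "c \<in> Aset" unfolding c_def using cls_A Rbd_q[OF q] by blast
  have cC: "c \<in> Cset" unfolding c_def using C_iff[OF Rbd_q[OF q]] po_one[OF P] by simp
  have mA: "- (c * fx) \<in> Aset" using cA fxA by (intro K.A_uminus K.A_mult)
  have "\<forall>ch\<in>K.chars. 0 \<le> ch (- (c * fx))"
  proof
    fix ch assume ch: "ch \<in> K.chars"
    have val: "ch (- (c * fx)) = - (ch c * ch fx)"
      using K.chars_neg[OF ch K.A_mult[OF cA fxA]] K.chars_mult[OF ch cA fxA] by simp
    have c0: "0 \<le> ch c" using K.chars_pos[OF ch cC] .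
    let ?\<psi> = "toK ch"
    have \<psi>K: "?\<psi> \<in> Kspace P" using toK_K[OF ch] .
    show "0 \<le> ch (- (c * fx))"
    proof (cases "?\<psi> \<in> W")
      case True
      then have "?\<psi> \<notin> O_fin P q" using H by blast
      then have "\<not> ?\<psi> (1, q) > 0" using \<psi>K unfolding O_fin_def by blast
      moreover have "?\<psi> (1, q) = ch c" unfolding c_def using toK_cls[OF Rbd_q[OF q]] .
      ultimately have "ch c = 0" using c0 by linarith
      then show ?thesis using val by simp
    next
      case False
      then have "?\<psi> \<notin> {\<psi> \<in> Kspace P. \<forall>p\<in>F. \<psi> (fst p) \<in> snd p}" using F(3) by blast
      then obtain p where p: "p \<in> F" "?\<psi> (fst p) \<notin> snd p" using \<psi>K by blast
      have pR: "fst p \<in> Rbd P" using F(2) p(1) by blast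
      have "ch (cls (fst p)) \<notin> snd p" using p(2) toK_cls[OF pR] by simp
      then have far: "\<bar>ch (cls (fst p)) - \<phi> (fst p)\<bar> \<ge> e" using e(2) p(1) by force
      have "real K + 1 \<le> (real n * ch (cls (fst p)) - real_of_int (mm (\<phi> (fst p))))\<^sup>2"
        unfolding mm_def by (rule far_term[OF far ne])
      also have "\<dots> \<le> (\<Sum>p\<in>F. (real n * ch (cls (fst p)) - real_of_int (mm (\<phi> (fst p))))\<^sup>2)"
        by (rule member_le_sum[OF p(1) _ F(1)]) simp
      finally have "ch fx \<le> 0" using eval[OF ch] by simp
      then have "0 \<le> - (ch c * ch fx)" using c0 by (simp add: mult_nonneg_nonpos)
      then show ?thesis using val by simp
    qed
  qed
  then have "- (c * fx) \<in> Cset" using K.KD[OF mA] by blast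
  moreover have "- (c * fx) = cls (1, q) * (- fx)" unfolding c_def by simp
  ultimately have "cls (1, q) * (- fx) \<in> Cset" by simp
  then have "- fx \<in> Cset" by (rule cdiv[OF q K.A_uminus[OF fxA]])
  moreover have \<phi>Q: "toQ \<phi> \<in> K.chars" by (rule toQ_chars[OF \<phi>])
  ultimately have "0 \<le> toQ \<phi> (- fx)" using K.chars_pos by blast
  then have neg: "toQ \<phi> fx \<le> 0" using K.chars_neg[OF \<phi>Q fxA] by simp
  have "(\<Sum>p\<in>F. (real n * toQ \<phi> (cls (fst p)) - real_of_int (mm (\<phi> (fst p))))\<^sup>2) \<le> real (card F) * 1"
  proof (rule sum_bounded_above)
    fix p assume p: "p \<in> F"
    have "toQ \<phi> (cls (fst p)) = \<phi> (fst p)" using toQ_cls[OF \<phi>] F(2) p by blast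
    then show "(real n * toQ \<phi> (cls (fst p)) - real_of_int (mm (\<phi> (fst p))))\<^sup>2 \<le> 1"
      unfolding mm_def using near_term by simp
  qed
  then have "toQ \<phi> fx \<ge> 1" using eval[OF \<phi>Q] unfolding K_def by simp
  then show False using neg by simp
qed

end

theorem proposition29:
  fixes P :: "('a::comm_ring_1) set" and q :: 'a
  assumes "po_cring P" and "localizable P" and "archimedean_po P"
    and "q \<in> Loc P"
  shows "Ktop P closure_of O_fin P q = topspace (Ktop P)"
proof -
  interpret S: setting P using assms(1-3) by unfold_locales
  let ?B = "{{\<phi> \<in> Kspace P. \<phi> a \<in> V} | a V. a \<in> Rbd P \<and> open V}"
  have top: "topspace (Ktop P) = Kspace P"
  proof -
    have "topspace (Ktop P) = \<Union>?B" unfolding Ktop_def by (rule topology_generated_by_topspace)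
    also have "\<dots> = Kspace P"
    proof
      show "\<Union>?B \<subseteq> Kspace P" by blast
      show "Kspace P \<subseteq> \<Union>?B"
      proof
        fix \<phi> assume "\<phi> \<in> Kspace P"
        moreover have "{\<phi> \<in> Kspace P. \<phi> (1, 1) \<in> UNIV} \<in> ?B" using S.Rbd_one by blast
        ultimately show "\<phi> \<in> \<Union>?B" by blast
      qed
    qed
    finally show ?thesis .
  qed
  show ?thesis
  proof (rule antisym[OF closure_of_subset_topspace], rule subsetI)
    fix \<phi> assume \<phi>: "\<phi> \<in> topspace (Ktop P)"
    show "\<phi> \<in> Ktop P closure_of O_fin P q"
      unfolding in_closure_of
    proof (intro conjI allI impI)
      show "\<phi> \<in> topspace (Ktop P)" by (rule \<phi>)
      fix T assume T: "\<phi> \<in> T \<and> openin (Ktop P) T"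
      then have "generate_topology_on ?B T" unfolding Ktop_def openin_topology_generated_by_iff by blast
      then show "\<exists>y. y \<in> O_fin P q \<and> y \<in> T" using S.dense[OF assms(4)] \<phi> top T by blast
    qed
  qed
qed

end
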